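(* For any $\Delta>0$, \[ \inf_{F \in \mathcal{H}_{\pi\Delta},\,F\neq 0} \frac{\|F\|_{L^2(\mathbb{R}, W_{\mathrm O})}}{\|F\|_{L^2(\mathbb{R})}} = 1 \quad\text{and}\quad \sup_{F \in \mathcal{H}_{\pi\Delta},\,F\neq 0} \frac{\|F\|_{L^2(\mathbb{R}, W_{\mathrm O})}}{\|F\|_{L^2(\mathbb{R})}} = \sqrt{1 + \tfrac{\Delta}{2}}. \]
   Context: $\mathcal{H}_{\pi\Delta}$ is the space of entire functions of exponential type at most $\pi\Delta$ that are square-integrable on $\mathbb{R}$. $W_{\mathrm O}(x)=1+\frac12\boldsymbol{\delta}_0(x)$, so $\|F\|^2_{L^2(\mathbb{R},W_{\mathrm O})}=\int_{\mathbb{R}}|F(x)|^2dx+\frac12|F(0)|^2$. *)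

theory Defs
  imports "HOL-Complex_Analysis.Complex_Analysis"
begin

definition exp_type_le :: "real \<Rightarrow> (complex \<Rightarrow> complex) \<Rightarrow> bool" where
  "exp_type_le \<tau> F \<longleftrightarrow>
     (\<forall>\<epsilon>>0. \<exists>C. \<forall>z. norm (F z) \<le> C * exp ((\<tau> + \<epsilon>) * norm z))"

definition PW_space :: "real \<Rightarrow> (complex \<Rightarrow> complex) set" where
  "PW_space \<tau> = {F. F holomorphic_on UNIV \<and> exp_type_le \<tau> F \<and>
      integrable lborel (\<lambda>x::real. (norm (F (complex_of_real x)))\<^sup>2)}"

definition L2_norm_R :: "(complex \<Rightarrow> complex) \<Rightarrow> real" where
  "L2_norm_R F = sqrt (\<integral>x. (norm (F (complex_of_real x)))\<^sup>2 \<partial>lborel)"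

text \<open>Norm in L^2(R, W_O) with W_O = 1 + (1/2) delta_0.\<close>
definition L2_norm_WO :: "(complex \<Rightarrow> complex) \<Rightarrow> real" where
  "L2_norm_WO F = sqrt ((\<integral>x. (norm (F (complex_of_real x)))\<^sup>2 \<partial>lborel) + (1/2) * (norm (F 0))\<^sup>2)"

end

theory Submission
  imports Defs "HOL-Real_Asymp.Real_Asymp"
begin


definition csinc :: "complex \<Rightarrow> complex" where
  "csinc z = (if z = 0 then 1 else sin z / z)"

lemma csinc_holo: "csinc holomorphic_on UNIV"
proof -
  have "(\<lambda>z. if z = 0 then deriv sin 0 else (sin z - sin 0) / (z - 0)) holomorphic_on UNIV"
    by (rule pole_lemma) (auto intro: holomorphic_intros)
  moreover have "deriv sin (0::complex) = 1"
    by (rule DERIV_imp_deriv) (auto intro!: derivative_eq_intros)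
  moreover have "(\<lambda>z. if z = 0 then deriv sin 0 else (sin z - sin 0) / (z - 0)) = csinc"
    using calculation(2) by (auto simp: fun_eq_iff csinc_def)
  ultimately show ?thesis by simp
qed

lemma sin_csinc: "sin z = z * csinc z"
  by (simp add: csinc_def)

lemma csinc_0 [simp]: "csinc 0 = 1" by (simp add: csinc_def)

lemma norm_sin_le_exp: "norm (sin z) \<le> exp \<bar>Im z\<bar>"
  using cmod_sin_le_exp[of 1 z] by simp

lemma csinc_bound: "\<exists>K>0. \<forall>z. norm (csinc z) \<le> K * exp \<bar>Im z\<bar> / (1 + norm z)"
proof -
  have "continuous_on (cball 0 1) csinc"
    using csinc_holo holomorphic_on_imp_continuous_on holomorphic_on_subset by blast
  then have "compact (csinc ` cball 0 1)" by (intro compact_continuous_image) auto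
  then obtain M where M: "M > 0" "\<And>z. z \<in> cball 0 1 \<Longrightarrow> norm (csinc z) \<le> M"
    by (metis compact_imp_bounded bounded_pos image_eqI)
  define K where "K = 2 * M + 2"
  have "norm (csinc z) \<le> K * exp \<bar>Im z\<bar> / (1 + norm z)" for z
  proof (cases "norm z \<le> 1")
    case True
    then have "norm (csinc z) \<le> M" using M by auto
    also have "M \<le> K / (1 + norm z)"
    proof -
      have "(1 + norm z) * M \<le> 2 * M" using True M by (intro mult_right_mono) auto
      then have "(1 + norm z) * M \<le> K" unfolding K_def by linarith
      then show ?thesis by (subst le_divide_eq) (auto simp: mult.commute add_pos_nonneg)
    qed
    also have "\<dots> \<le> K * exp \<bar>Im z\<bar> / (1 + norm z)"
      using M by (intro divide_right_mono) (auto simp: K_def)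
    finally show ?thesis .
  next
    case False
    then have z0: "z \<noteq> 0" by auto
    have "norm (csinc z) = norm (sin z) / norm z" using z0 by (simp add: csinc_def norm_divide)
    also have "\<dots> \<le> exp \<bar>Im z\<bar> / norm z"
      by (intro divide_right_mono norm_sin_le_exp) auto
    also have "\<dots> \<le> K * exp \<bar>Im z\<bar> / (1 + norm z)"
    proof -
      have "2 * norm z \<le> K * norm z" using M by (intro mult_right_mono) (auto simp: K_def)
      then have h1: "1 + norm z \<le> K * norm z" using False by linarith
      have "exp \<bar>Im z\<bar> * (1 + norm z) \<le> exp \<bar>Im z\<bar> * (K * norm z)"
        by (intro mult_left_mono h1) auto
      moreover have "norm z > 0" "1 + norm z > 0" using False by auto
      ultimately show ?thesis by (simp add: divide_simps mult_ac)
    qed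
    finally show ?thesis .
  qed
  moreover have "K > 0" using M by (simp add: K_def)
  ultimately show ?thesis by blast
qed

lemma csinc_real_le: "norm (csinc (of_real x)) \<le> 1"
proof (cases "x = 0")
  case False
  have "norm (csinc (of_real x)) = \<bar>sin x\<bar> / \<bar>x\<bar>"
  proof -
    have "sin (complex_of_real x) = complex_of_real (sin x)" by (rule sin_of_real)
    then show ?thesis using False by (simp add: csinc_def norm_divide)
  qed
  also have "\<dots> \<le> 1" using False abs_sin_x_le_abs_x[of x] by simp
  finally show ?thesis .
qed simp



lemma entire_primitive:
  assumes "f holomorphic_on UNIV"
  obtains g where "\<And>x. (g has_field_derivative f x) (at x)"
  using holomorphic_convex_primitive'[of UNIV f] assms by auto

lemma entire_linepath:
  assumes "\<And>x. (g has_field_derivative f x) (at x)"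
  shows "(f has_contour_integral (g b - g a)) (linepath a b)"
  using contour_integral_primitive[of UNIV g f "linepath a b"] assms by auto

lemma cont_eq_at0:
  fixes f g :: "complex \<Rightarrow> complex"
  assumes "continuous_on UNIV f" "continuous_on UNIV g" "\<And>z. z \<noteq> 0 \<Longrightarrow> f z = g z"
  shows "f 0 = g 0"
proof -
  have "(f \<longlongrightarrow> f 0) (at 0)" "(g \<longlongrightarrow> g 0) (at 0)"
    using assms(1,2) by (auto simp: continuous_on_eq_continuous_at isCont_def)
  moreover have "eventually (\<lambda>z. g z = f z) (at 0)"
    using assms(3) by (auto simp: eventually_at_filter)
  ultimately have "(f \<longlongrightarrow> g 0) (at 0)" "(f \<longlongrightarrow> f 0) (at 0)"
    using tendsto_cong by blast+
  then show ?thesis using tendsto_unique by (metis at_neq_bot)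
qed

lemma seg_est:
  assumes G: "G holomorphic_on UNIV"
    and L: "\<And>z. z \<in> closed_segment p q \<Longrightarrow> (L has_field_derivative 1/z) (at z)"
    and bd: "\<And>z. z \<in> closed_segment p q \<Longrightarrow> norm (G z + c / z) \<le> M"
    and M: "M \<ge> 0"
  shows "norm (contour_integral (linepath p q) G + c * (L q - L p)) \<le> M * norm (q - p)"
proof -
  have i1: "(G has_contour_integral contour_integral (linepath p q) G) (linepath p q)"
    by (rule has_contour_integral_integral, rule contour_integrable_holomorphic_simple[OF G]) auto
  have i2: "((\<lambda>z. 1/z) has_contour_integral (L q - L p)) (linepath p q)"
    using contour_integral_primitive[of "closed_segment p q" L "\<lambda>z. 1/z" "linepath p q"] L
    by (auto intro: has_field_derivative_at_within)
  have "((\<lambda>z. G z + c * (1/z)) has_contour_integral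
          (contour_integral (linepath p q) G + c * (L q - L p))) (linepath p q)"
    by (intro has_contour_integral_add has_contour_integral_lmul i1 i2)
  then show ?thesis
    by (rule has_contour_integral_bound_linepath) (use bd M in auto)
qed

lemma Ln_deriv_rot:
  fixes s :: real
  assumes "s = 1 \<or> s = -1" "s * Im z \<ge> 0" "z \<noteq> 0"
  shows "((\<lambda>w. Ln (- (of_real s * \<i>) * w)) has_field_derivative 1/z) (at z)"
proof -
  have ns: "- (of_real s * \<i>) * z \<notin> \<real>\<^sub>\<le>\<^sub>0"
  proof
    assume "- (of_real s * \<i>) * z \<in> \<real>\<^sub>\<le>\<^sub>0"
    then have "Im (- (of_real s * \<i>) * z) = 0" "Re (- (of_real s * \<i>) * z) \<le> 0"
      by (auto simp: complex_nonpos_Reals_iff)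
    then have "s * Re z = 0" "s * Im z \<le> 0" by auto
    then have "Re z = 0" "Im z = 0" using assms by auto
    then show False using assms(3) by (simp add: complex_eq_iff)
  qed
  have "((\<lambda>w. Ln (- (of_real s * \<i>) * w)) has_field_derivative
          (inverse (- (of_real s * \<i>) * z) * (- (of_real s * \<i>)))) (at z)"
  proof (rule DERIV_chain2[where f = Ln])
    show "(Ln has_field_derivative inverse (- (of_real s * \<i>) * z)) (at (- (of_real s * \<i>) * z))"
      by (rule has_field_derivative_Ln[OF ns])
    show "((\<lambda>w. - (of_real s * \<i>) * w) has_field_derivative - (of_real s * \<i>)) (at z)"
      by (auto intro!: derivative_eq_intros)
  qed
  moreover have "inverse (- (of_real s * \<i>) * z) * (- (of_real s * \<i>)) = 1/z"
    using assms by (auto simp: field_simps)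
  ultimately show ?thesis by simp
qed

lemma Ln_rot_vals:
  fixes s R :: real
  assumes "s = 1 \<or> s = -1" "R > 0"
  shows "Ln (- (of_real s * \<i>) * of_real R) - Ln (- (of_real s * \<i>) * (- of_real R))
          = - (of_real s * \<i> * pi)"
proof -
  have a: "Ln (of_real R * \<i>) = of_real (ln R) + \<i> * of_real pi / 2"
    using Ln_times_of_real[of R \<i>] Ln_of_real[of R] assms by simp
  have b: "Ln (of_real R * (- \<i>)) = of_real (ln R) - \<i> * of_real pi / 2"
    using Ln_times_of_real[of R "-\<i>"] Ln_of_real[of R] assms by simp
  show ?thesis using assms(1)
  proof
    assume "s = 1" then show ?thesis using a b by (simp add: mult.commute)
  next
    assume "s = -1" then show ?thesis using a b by (simp add: mult.commute)
  qed
qed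

lemma three_seg:
  fixes s R M :: real and c :: complex
  assumes G: "G holomorphic_on UNIV" and s: "s = 1 \<or> s = -1" and R: "R > 0" and M: "M \<ge> 0"
    and bd: "\<And>z. s * Im z \<ge> 0 \<Longrightarrow> norm z \<ge> R \<Longrightarrow> norm (G z + c / z) \<le> M"
  shows "norm (contour_integral (linepath (- of_real R) (of_real R)) G - of_real s * \<i> * pi * c)
          \<le> 4 * M * R"
proof -
  define L where "L w = Ln (- (of_real s * \<i>) * w)" for w
  define p1 where "p1 = - (of_real R :: complex)"
  define p2 where "p2 = - of_real R + of_real s * \<i> * (of_real R :: complex)"
  define p3 where "p3 = of_real R + of_real s * \<i> * (of_real R :: complex)"
  define p4 where "p4 = (of_real R :: complex)"
  obtain PG where PG: "\<And>x. (PG has_field_derivative G x) (at x)" using entire_primitive[OF G] by blast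
  have ci: "contour_integral (linepath a b) G = PG b - PG a" for a b
    using entire_linepath[OF PG] contour_integral_unique by blast
  have Ld: "(L has_field_derivative 1/z) (at z)" if "s * Im z \<ge> 0" "z \<noteq> 0" for z
    unfolding L_def using Ln_deriv_rot[OF s that] .
  have seg: "norm (contour_integral (linepath p q) G + c * (L q - L p)) \<le> M * norm (q - p)"
    if "\<And>z. z \<in> closed_segment p q \<Longrightarrow> s * Im z \<ge> 0 \<and> norm z \<ge> R" for p q
  proof (rule seg_est[OF G _ _ M])
    fix z assume z: "z \<in> closed_segment p q"
    then have "s * Im z \<ge> 0" "norm z \<ge> R" using that by auto
    moreover have "z \<noteq> 0" using R \<open>norm z \<ge> R\<close> by auto
    ultimately show "(L has_field_derivative 1/z) (at z)" "norm (G z + c / z) \<le> M"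
      using Ld bd by auto
  qed
  have ss: "s * s = 1" using s by auto
  have RI: "Re p1 = -R" "Im p1 = 0" "Re p2 = -R" "Im p2 = s * R" "Re p3 = R" "Im p3 = s * R"
    "Re p4 = R" "Im p4 = 0" by (simp_all add: p1_def p2_def p3_def p4_def)
  have segRI: "Re z = (1 - u) * Re p + u * Re q" "Im z = (1 - u) * Im p + u * Im q"
    if "z = (1 - u) *\<^sub>R p + u *\<^sub>R q" for z p q :: complex and u :: real
    using that by simp_all
  have s1: "s * Im z \<ge> 0 \<and> norm z \<ge> R" if "z \<in> closed_segment p1 p2" for z
  proof -
    from that obtain u where u: "0 \<le> u" "u \<le> 1" "z = (1 - u) *\<^sub>R p1 + u *\<^sub>R p2"
      by (auto simp: in_segment)
    have A: "Re z = -R" "Im z = u * s * R" using segRI[OF u(3)] RI by (simp_all add: algebra_simps)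
    have "s * Im z = u * (s * s) * R" by (simp add: A algebra_simps)
    then have "s * Im z = u * R" using ss by simp
    moreover have "norm z \<ge> R" using abs_Re_le_cmod[of z] A(1) by auto
    ultimately show ?thesis using R u by auto
  qed
  have s2: "s * Im z \<ge> 0 \<and> norm z \<ge> R" if "z \<in> closed_segment p2 p3" for z
  proof -
    from that obtain u where u: "0 \<le> u" "u \<le> 1" "z = (1 - u) *\<^sub>R p2 + u *\<^sub>R p3"
      by (auto simp: in_segment)
    have A: "Im z = s * R" using segRI[OF u(3)] RI by (simp add: algebra_simps)
    have "s * Im z = (s * s) * R" by (simp add: A algebra_simps)
    then have "s * Im z = R" using ss by simp
    moreover have "\<bar>s * R\<bar> = R" using s R by auto
    then have "norm z \<ge> R" using abs_Im_le_cmod[of z] A by auto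
    ultimately show ?thesis using R by auto
  qed
  have s3: "s * Im z \<ge> 0 \<and> norm z \<ge> R" if "z \<in> closed_segment p3 p4" for z
  proof -
    from that obtain u where u: "0 \<le> u" "u \<le> 1" "z = (1 - u) *\<^sub>R p3 + u *\<^sub>R p4"
      by (auto simp: in_segment)
    have A: "Re z = R" "Im z = (1 - u) * s * R" using segRI[OF u(3)] RI by (simp_all add: algebra_simps)
    have "s * Im z = (1 - u) * (s * s) * R" by (simp add: A algebra_simps)
    then have "s * Im z = (1 - u) * R" using ss by simp
    moreover have "norm z \<ge> R" using abs_Re_le_cmod[of z] A(1) by auto
    ultimately show ?thesis using R u by auto
  qed
  have n1: "norm (p2 - p1) = R" and n2: "norm (p3 - p2) = 2 * R" and n3: "norm (p4 - p3) = R"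
    using s R by (auto simp: p1_def p2_def p3_def p4_def norm_mult)
  have e1: "norm (contour_integral (linepath p1 p2) G + c * (L p2 - L p1)) \<le> M * R"
    using seg[of p1 p2] s1 n1 by auto
  have e2: "norm (contour_integral (linepath p2 p3) G + c * (L p3 - L p2)) \<le> M * (2 * R)"
    using seg[of p2 p3] s2 n2 by auto
  have e3: "norm (contour_integral (linepath p3 p4) G + c * (L p4 - L p3)) \<le> M * R"
    using seg[of p3 p4] s3 n3 by auto
  have Lv: "L p4 - L p1 = - (of_real s * \<i> * pi)"
    unfolding L_def p1_def p4_def using Ln_rot_vals[OF s R] by simp
  have "contour_integral (linepath (- of_real R) (of_real R)) G - of_real s * \<i> * pi * c
      = (contour_integral (linepath p1 p2) G + c * (L p2 - L p1))
        + (contour_integral (linepath p2 p3) G + c * (L p3 - L p2))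
        + (contour_integral (linepath p3 p4) G + c * (L p4 - L p3))"
  proof -
    have "- p4 = p1" by (simp add: p1_def p4_def)
    moreover have "L p1 = L p4 + of_real s * \<i> * pi" using Lv by (simp add: algebra_simps)
    ultimately show ?thesis unfolding ci p4_def[symmetric] by (simp add: algebra_simps)
  qed
  also have "norm \<dots> \<le> M * R + M * (2 * R) + M * R" (is "norm (?X1 + ?X2 + ?X3) \<le> _")
    using norm_triangle_ineq[of "?X1 + ?X2" ?X3] norm_triangle_ineq[of ?X1 ?X2] e1 e2 e3 by linarith
  finally show ?thesis by (simp add: algebra_simps)
qed



lemma integrable_inv_1_sq: "integrable lborel (\<lambda>x::real. 1 / (1 + x\<^sup>2))"
proof -
  have "set_integrable lborel (einterval (-\<infinity>) \<infinity>) (\<lambda>x::real. 1 / (1 + x\<^sup>2))"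
  proof (rule interval_integral_FTC_nonneg(1)[where F = arctan and A = "-(pi/2)" and B = "pi/2"])
    show "DERIV arctan x :> 1 / (1 + x\<^sup>2)" for x
      using DERIV_arctan[of x] by (simp add: divide_inverse)
    show "isCont (\<lambda>x::real. 1 / (1 + x\<^sup>2)) x" for x
      by (intro continuous_intros) (smt (verit) zero_le_power2)
    show "((arctan \<circ> real_of_ereal) \<longlongrightarrow> - (pi / 2)) (at_right (- \<infinity>))"
      unfolding ereal_tendsto_simps1 by (rule tendsto_arctan_at_bot)
    show "((arctan \<circ> real_of_ereal) \<longlongrightarrow> pi / 2) (at_left \<infinity>)"
      unfolding ereal_tendsto_simps1 by (rule tendsto_arctan_at_top)
  qed auto
  then show ?thesis by (simp add: set_integrable_def)
qed

lemma E_bound: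
  fixes s b K R :: real and z w :: complex
  assumes "norm w \<le> K * exp (b * \<bar>Im z\<bar>) / (1 + norm z)" "s = 1 \<or> s = -1" "s * Im z \<ge> 0"
    "norm z \<ge> R" "R > 0" "K \<ge> 0"
  shows "norm (w * exp (of_real s * \<i> * (of_real b * z)) / z) \<le> K / R\<^sup>2"
proof -
  have ai: "\<bar>Im z\<bar> = s * Im z" using assms(2,3) by auto
  have ne: "norm (exp (of_real s * \<i> * (of_real b * z))) = exp (- (b * \<bar>Im z\<bar>))"
    unfolding ai by (simp add: norm_exp algebra_simps)
  have "norm (w * exp (of_real s * \<i> * (of_real b * z)))
        \<le> K * exp (b * \<bar>Im z\<bar>) / (1 + norm z) * exp (- (b * \<bar>Im z\<bar>))"
    unfolding norm_mult ne by (rule mult_right_mono[OF assms(1)]) simp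
  also have "\<dots> = K / (1 + norm z)" by (simp add: exp_minus field_simps)
  also have "\<dots> \<le> K / R" using assms by (intro divide_left_mono) auto
  finally have "norm (w * exp (of_real s * \<i> * (of_real b * z))) / norm z \<le> (K / R) / R"
    using assms by (intro frac_le) auto
  then show ?thesis by (simp add: norm_divide power2_eq_square)
qed

lemma CL:
  fixes \<Psi> :: "complex \<Rightarrow> complex" and b K :: real
  assumes holo: "\<Psi> holomorphic_on UNIV" and b: "b > 0" and K: "K \<ge> 0"
    and bd: "\<And>z. norm (\<Psi> z) \<le> K * exp (b * \<bar>Im z\<bar>) / (1 + norm z)"
  shows "integrable lborel (\<lambda>x::real. \<Psi> (of_real x) * (of_real b * csinc (of_real (b * x))))"
    and "integral\<^sup>L lborel (\<lambda>x::real. \<Psi> (of_real x) * (of_real b * csinc (of_real (b * x))))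
          = pi * \<Psi> 0"
proof -
  define g where "g = (\<lambda>x::real. \<Psi> (of_real x) * (of_real b * csinc (of_real (b * x))))"
  obtain K1 where K1: "K1 > 0" "\<And>z. norm (csinc z) \<le> K1 * exp \<bar>Im z\<bar> / (1 + norm z)"
    using csinc_bound by blast
  define m where "m = min 1 b"
  have m: "m > 0" "m \<le> 1" "m \<le> b" using b by (auto simp: m_def)
  define C where "C = K * b * K1 / m"
  have gbd: "norm (g x) \<le> C * (1 / (1 + x\<^sup>2))" for x
  proof -
    have n1: "norm (\<Psi> (of_real x)) \<le> K / (1 + \<bar>x\<bar>)" using bd[of "of_real x"] by simp
    have n2: "norm (csinc (of_real (b*x))) \<le> K1 / (1 + b * \<bar>x\<bar>)"
      using K1(2)[of "of_real (b*x)"] b by (simp add: abs_mult norm_mult)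
    have "norm (g x) = norm (\<Psi> (of_real x)) * (b * norm (csinc (of_real (b*x))))"
      using b by (simp add: g_def norm_mult)
    also have "\<dots> \<le> (K / (1 + \<bar>x\<bar>)) * (b * (K1 / (1 + b * \<bar>x\<bar>)))"
      by (intro mult_mono n1 mult_left_mono n2) (use b K in auto)
    also have "\<dots> = K * b * K1 / ((1 + \<bar>x\<bar>) * (1 + b * \<bar>x\<bar>))" by simp
    also have "\<dots> \<le> K * b * K1 / (m * (1 + x\<^sup>2))"
    proof (rule divide_left_mono)
      have "m * (1 + x\<^sup>2) \<le> m * (1 + \<bar>x\<bar>)\<^sup>2"
        using m by (intro mult_left_mono) (auto simp: power2_eq_square algebra_simps)
      also have "m * (1 + \<bar>x\<bar>)\<^sup>2 = (1 + \<bar>x\<bar>) * (m + m * \<bar>x\<bar>)"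
        by (simp add: power2_eq_square algebra_simps)
      also have "\<dots> \<le> (1 + \<bar>x\<bar>) * (1 + b * \<bar>x\<bar>)"
        using m by (intro mult_left_mono add_mono mult_right_mono) auto
      finally show "m * (1 + x\<^sup>2) \<le> (1 + \<bar>x\<bar>) * (1 + b * \<bar>x\<bar>)" .
      show "0 \<le> K * b * K1" using K b K1 by auto
      show "0 < (1 + \<bar>x\<bar>) * (1 + b * \<bar>x\<bar>) * (m * (1 + x\<^sup>2))"
        using m b by (intro mult_pos_pos add_pos_nonneg) auto
    qed
    also have "\<dots> = C * (1 / (1 + x\<^sup>2))" by (simp add: C_def)
    finally show ?thesis .
  qed
  have cPsi: "continuous_on UNIV \<Psi>" by (rule holomorphic_on_imp_continuous_on[OF holo])
  have ccs: "continuous_on UNIV csinc" by (rule holomorphic_on_imp_continuous_on[OF csinc_holo])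
  have cg: "continuous_on UNIV g"
    unfolding g_def
    by (intro continuous_intros continuous_on_compose2[OF cPsi] continuous_on_compose2[OF ccs]) auto
  have int: "integrable lborel g"
  proof (rule Bochner_Integration.integrable_bound)
    show "integrable lborel (\<lambda>x. C * (1 / (1 + x\<^sup>2)))"
      using integrable_inv_1_sq by (rule integrable_mult_right)
    show "g \<in> borel_measurable lborel" using borel_measurable_continuous_onI[OF cg] by simp
    show "AE x in lborel. norm (g x) \<le> norm (C * (1 / (1 + x\<^sup>2)))"
    proof -
      have "C \<ge> 0" using K b K1 m by (simp add: C_def)
      then show ?thesis by (intro AE_I2 order_trans[OF gbd]) auto
    qed
  qed
  then show "integrable lborel (\<lambda>x::real. \<Psi> (of_real x) * (of_real b * csinc (of_real (b * x))))"
    by (simp add: g_def)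
  define Es where "Es s z = \<Psi> z * exp (of_real s * \<i> * (of_real b * z))" for s :: real and z
  define Et where "Et s = (\<lambda>z. if z = 0 then deriv (Es s) 0 else (Es s z - Es s 0) / (z - 0))" for s
  have Esh: "Es s holomorphic_on UNIV" for s
    unfolding Es_def[abs_def] by (intro holomorphic_intros holo)
  have Eth: "Et s holomorphic_on UNIV" for s
    unfolding Et_def by (rule pole_lemma[OF Esh]) auto
  have Es0: "Es s 0 = \<Psi> 0" for s by (simp add: Es_def)
  define J where "J z = \<Psi> z * (of_real b * csinc (of_real b * z))" for z
  have "(csinc \<circ> (\<lambda>z. of_real b * z)) holomorphic_on UNIV"
    by (rule holomorphic_on_compose) (auto intro: holomorphic_intros holomorphic_on_subset[OF csinc_holo])
  then have Jh: "J holomorphic_on UNIV"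
    unfolding J_def[abs_def] by (intro holomorphic_intros holo) (simp add: o_def)
  have JE0: "J z = (Et 1 z - Et (-1) z) / (2 * \<i>)" if "z \<noteq> 0" for z
  proof -
    have "Et 1 z - Et (-1) z = (Es 1 z - Es (-1) z) / z"
      using that by (simp add: Et_def Es0 diff_divide_distrib)
    also have "Es 1 z - Es (-1) z = \<Psi> z * (2 * \<i> * sin (of_real b * z))"
    proof -
      have "2 * \<i> * sin (of_real b * z) = exp (\<i> * (of_real b * z)) - exp (-(\<i> * (of_real b * z)))"
        by (simp add: sin_exp_eq)
      moreover have "Es 1 z = \<Psi> z * exp (\<i> * (of_real b * z))" "Es (-1) z = \<Psi> z * exp (-(\<i> * (of_real b * z)))"
        by (simp_all add: Es_def)
      ultimately show ?thesis by (simp only: right_diff_distrib[symmetric])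
    qed
    also have "sin (of_real b * z) = (of_real b * z) * csinc (of_real b * z)" by (rule sin_csinc)
    finally show ?thesis using that by (simp add: J_def field_simps)
  qed
  have JE: "J = (\<lambda>z. (Et 1 z - Et (-1) z) / (2 * \<i>))"
  proof
    fix z show "J z = (Et 1 z - Et (-1) z) / (2 * \<i>)"
    proof (cases "z = 0")
      case True
      have "continuous_on UNIV (\<lambda>z. (Et 1 z - Et (-1) z) / (2 * \<i>))"
        by (intro continuous_intros holomorphic_on_imp_continuous_on Eth) auto
      then show ?thesis using True cont_eq_at0[OF holomorphic_on_imp_continuous_on[OF Jh] _ JE0] by blast
    qed (rule JE0)
  qed
  have bound_R: "norm (integral {-R..R} g - pi * \<Psi> 0) \<le> 4 * K / R" if R: "R > 0" for R
  proof -
    have Etz: "Et s z + \<Psi> 0 / z = \<Psi> z * exp (of_real s * \<i> * (of_real b * z)) / z"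
      if "z \<noteq> 0" for s z
      using that by (simp add: Et_def Es0 Es_def diff_divide_distrib)
    have up: "norm (contour_integral (linepath (- of_real R) (of_real R)) (Et 1)
                 - of_real 1 * \<i> * pi * \<Psi> 0) \<le> 4 * (K / R\<^sup>2) * R"
    proof (rule three_seg[OF Eth])
      fix z assume z: "1 * Im z \<ge> 0" "norm z \<ge> R"
      have "z \<noteq> 0" using R z by auto
      show "norm (Et 1 z + \<Psi> 0 / z) \<le> K / R\<^sup>2"
        unfolding Etz[OF \<open>z \<noteq> 0\<close>] by (rule E_bound[OF bd]) (use z R K in auto)
    qed (use R K in auto)
    have dn: "norm (contour_integral (linepath (- of_real R) (of_real R)) (Et (-1))
                 - of_real (-1) * \<i> * pi * \<Psi> 0) \<le> 4 * (K / R\<^sup>2) * R"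
    proof (rule three_seg[OF Eth])
      fix z assume z: "-1 * Im z \<ge> 0" "norm z \<ge> R"
      have "z \<noteq> 0" using R z by auto
      show "norm (Et (-1) z + \<Psi> 0 / z) \<le> K / R\<^sup>2"
        unfolding Etz[OF \<open>z \<noteq> 0\<close>] by (rule E_bound[OF bd]) (use z R K in auto)
    qed (use R K in auto)
    define I1 where "I1 = contour_integral (linepath (- of_real R) (of_real R)) (Et 1)"
    define I2 where "I2 = contour_integral (linepath (- of_real R) (of_real R)) (Et (-1))"
    have hi: "(Et s has_contour_integral contour_integral (linepath (- of_real R) (of_real R)) (Et s))
               (linepath (- of_real R) (of_real R))" for s
      by (rule has_contour_integral_integral, rule contour_integrable_holomorphic_simple[OF Eth]) auto
    have "(J has_contour_integral (I1 - I2) / (2 * \<i>)) (linepath (- of_real R) (of_real R))"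
      unfolding JE I1_def I2_def by (intro has_contour_integral_div has_contour_integral_diff hi)
    then have "contour_integral (linepath (- of_real R) (of_real R)) J = (I1 - I2) / (2 * \<i>)"
      by (rule contour_integral_unique)
    moreover have "contour_integral (linepath (- of_real R) (of_real R)) J = integral {-R..R} (\<lambda>x. J (of_real x))"
      using R by (subst contour_integral_linepath_Reals_eq) auto
    moreover have "(\<lambda>x. J (of_real x)) = g" by (auto simp: J_def g_def)
    ultimately have eq: "integral {-R..R} g = (I1 - I2) / (2 * \<i>)" by simp
    have "integral {-R..R} g - pi * \<Psi> 0
          = ((I1 - \<i> * pi * \<Psi> 0) - (I2 - (- \<i> * pi * \<Psi> 0))) / (2 * \<i>)"
      unfolding eq by (simp add: field_simps)
    also have "norm \<dots> \<le> (4 * (K / R\<^sup>2) * R + 4 * (K / R\<^sup>2) * R) / 2"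
      unfolding norm_divide
      using norm_triangle_ineq4[of "I1 - \<i> * pi * \<Psi> 0" "I2 - (- \<i> * pi * \<Psi> 0)"] up dn
      unfolding I1_def I2_def by (simp add: norm_mult)
    also have "\<dots> = 4 * K / R" using R by (simp add: power2_eq_square field_simps)
    finally show ?thesis .
  qed
  define L where "L = integral\<^sup>L lborel g"
  have hL: "(g has_integral L) UNIV" unfolding L_def by (rule has_integral_integral_lborel[OF int])
  have "L = pi * \<Psi> 0"
  proof (rule ccontr)
    assume ne: "L \<noteq> pi * \<Psi> 0"
    define e where "e = norm (L - pi * \<Psi> 0) / 2"
    have e: "e > 0" using ne by (simp add: e_def)
    from hL[unfolded has_integral_alt'[of g L UNIV]] e obtain B where B: "B > 0"
      "\<And>a b. ball 0 B \<subseteq> cbox a b \<Longrightarrow> norm (integral (cbox a b) g - L) < e"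
      by auto
    define R where "R = B + 1 + 4 * K / e"
    have "4 * K / e \<ge> 0" using K e by simp
    then have R: "R > 0" "R > B" using B by (auto simp: R_def)
    have "ball 0 B \<subseteq> cbox (-R) R" using R by (auto simp: dist_real_def)
    then have n1: "norm (integral {-R..R} g - L) < e" using B(2)[of "-R" R] by simp
    have n2: "norm (integral {-R..R} g - pi * \<Psi> 0) \<le> 4 * K / R" using bound_R[OF R(1)] .
    have "4 * K \<le> e * R" using e K B
      by (simp add: R_def algebra_simps)
    then have "4 * K / R \<le> e" using R by (simp add: divide_simps)
    then have "norm (L - pi * \<Psi> 0) < 2 * e"
      using n1 n2 norm_triangle_ineq[of "L - integral {-R..R} g" "integral {-R..R} g - pi * \<Psi> 0"]
        norm_minus_commute[of L "integral {-R..R} g"] by simp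
    then show False by (simp add: e_def)
  qed
  then show "integral\<^sup>L lborel (\<lambda>x::real. \<Psi> (of_real x) * (of_real b * csinc (of_real (b * x))))
          = pi * \<Psi> 0" by (simp add: L_def g_def)
qed



lemma mm_trunc:
  fixes k :: "complex \<Rightarrow> complex"
  assumes D: "open D" "D \<subseteq> T" "closed T"
    and holo: "k holomorphic_on D" and cont: "continuous_on T k"
    and bd: "\<And>z. z \<in> T \<Longrightarrow> z \<notin> D \<Longrightarrow> norm (k z) \<le> B"
    and arcs: "\<And>e r. e > 0 \<Longrightarrow> \<exists>R>r. \<forall>z\<in>T. norm z = R \<longrightarrow> norm (k z) \<le> B + e"
    and xi: "\<xi> \<in> D"
  shows "norm (k \<xi>) \<le> B"
proof (rule field_le_epsilon)
  fix e :: real assume e: "e > 0"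
  obtain R where R: "R > norm \<xi>" "\<And>z. z \<in> T \<Longrightarrow> norm z = R \<Longrightarrow> norm (k z) \<le> B + e"
    using arcs[OF e, of "norm \<xi>"] by blast
  define S where "S = D \<inter> ball 0 R"
  have oS: "open S" using D by (simp add: S_def open_Int)
  have clS: "closure S \<subseteq> T \<inter> cball 0 R"
    by (rule closure_minimal) (use D in \<open>auto simp: S_def\<close>)
  show "norm (k \<xi>) \<le> B + e"
  proof (rule maximum_modulus_frontier[of k S])
    show "k holomorphic_on interior S" using holo
      by (subst interior_open[OF oS]) (auto simp: S_def intro: holomorphic_on_subset)
    show "continuous_on (closure S) k" using cont clS continuous_on_subset by blast
    show "bounded S" by (simp add: S_def bounded_Int)
    show "\<xi> \<in> S" using xi R by (simp add: S_def)
    fix z assume z: "z \<in> frontier S"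
    then have zc: "z \<in> T" "norm z \<le> R" using clS by (auto simp: frontier_def)
    have "z \<notin> S" using z oS by (simp add: frontier_def interior_open)
    then have "z \<notin> D \<or> norm z = R" using zc by (auto simp: S_def)
    then show "norm (k z) \<le> B + e"
    proof
      assume "z \<notin> D" then show ?thesis using bd[OF zc(1)] e by simp
    next
      assume "norm z = R" then show ?thesis using R(2)[OF zc(1)] by simp
    qed
  qed
qed

lemma limit_le_from_above:
  fixes x B D :: real
  assumes "\<And>\<eta>. \<eta> > 0 \<Longrightarrow> x \<le> B * exp (\<eta> * D)"
  shows "x \<le> B"
proof -
  have "((\<lambda>\<eta>. B * exp (\<eta> * D)) \<longlongrightarrow> B * exp (0 * D)) (at_right 0)"
    by (intro tendsto_intros)
  then have "((\<lambda>\<eta>. B * exp (\<eta> * D)) \<longlongrightarrow> B) (at_right 0)" by simp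
  moreover have "eventually (\<lambda>\<eta>. x \<le> B * exp (\<eta> * D)) (at_right (0::real))"
    by (rule eventually_mono[OF eventually_at_right_less]) (use assms in auto)
  ultimately show ?thesis
    by (intro tendsto_le[of "at_right 0" _ B "\<lambda>_. x" x]) auto
qed

lemma wLn_lower:
  assumes "Re w \<ge> 1" "\<bar>Im w\<bar> \<le> Re w"
  shows "Re (w * Ln w) \<ge> Re w * (ln (Re w) - pi/2)"
proof -
  have w0: "w \<noteq> 0" using assms by auto
  have "Re (w * Ln w) = Re w * ln (norm w) - Im w * Im (Ln w)" using w0 by simp
  moreover have "ln (Re w) \<le> ln (norm w)" using assms complex_Re_le_cmod[of w]
    by (subst ln_le_cancel_iff) auto
  moreover have "\<bar>Im (Ln w)\<bar> < pi/2" using assms by (intro Re_Ln_pos_lt_imp) auto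
  moreover have "Im w * Im (Ln w) \<le> Re w * (pi/2)"
  proof -
    have "Im w * Im (Ln w) \<le> \<bar>Im w\<bar> * \<bar>Im (Ln w)\<bar>" by (simp add: abs_mult[symmetric])
    also have "\<dots> \<le> Re w * (pi/2)"
      using assms \<open>\<bar>Im (Ln w)\<bar> < pi/2\<close> by (intro mult_mono) auto
    finally show ?thesis .
  qed
  moreover have "Re w * ln (Re w) \<le> Re w * ln (norm w)"
    using assms \<open>ln (Re w) \<le> ln (norm w)\<close> by (intro mult_left_mono) auto
  ultimately have "Re (w * Ln w) \<ge> Re w * ln (Re w) - Re w * (pi/2)"
    by linarith
  then show ?thesis by (simp add: algebra_simps)
qed

lemma f_lower:
  assumes "t \<ge> (1::real)"
  shows "t * (ln t - pi/2) \<ge> - (exp (pi/2) * (pi/2))"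
proof (cases "ln t \<ge> pi/2")
  case True
  then have "t * (ln t - pi/2) \<ge> 0" using assms by simp
  moreover have "exp (pi/2) * (pi/2) > 0" by simp
  ultimately show ?thesis by linarith
next
  case False
  have "t = exp (ln t)" using assms by simp
  then have "t < exp (pi/2)" using False by (metis exp_less_mono linorder_not_le)
  moreover have "ln t \<ge> 0" using assms by simp
  ultimately have "t * (ln t - pi/2) \<ge> t * (- pi/2)" using assms by (intro mult_left_mono) auto
  moreover have "t * (- pi/2) \<ge> - (exp (pi/2) * (pi/2))" using \<open>t < exp (pi/2)\<close> assms
    by (simp add: mult_right_mono)
  ultimately show ?thesis by linarith
qed

lemma f_mono:
  assumes "exp (pi/2) \<le> R" "R \<le> t"
  shows "R * (ln R - pi/2) \<le> t * (ln t - pi/2)"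
proof -
  have R0: "R > 0" using assms(1) exp_gt_zero[of "pi/2"] by linarith
  have "ln (exp (pi/2)) \<le> ln R" using assms(1) R0 by (subst ln_le_cancel_iff) auto
  then have "ln R \<ge> pi/2" by simp
  moreover have "ln R \<le> ln t" using assms R0 by simp
  ultimately show ?thesis using assms R0 by (intro mult_mono) auto
qed

lemma PL_quadrant:
  fixes h :: "complex \<Rightarrow> complex" and M C c :: real
  assumes holo: "h holomorphic_on {z. Re z > 0 \<and> Im z > 0}"
    and cont: "continuous_on {z. Re z \<ge> 0 \<and> Im z \<ge> 0} h"
    and bdry: "\<And>z. Re z \<ge> 0 \<Longrightarrow> Im z \<ge> 0 \<Longrightarrow> Re z = 0 \<or> Im z = 0 \<Longrightarrow> norm (h z) \<le> M"
    and growth: "\<And>z. Re z \<ge> 0 \<Longrightarrow> Im z \<ge> 0 \<Longrightarrow> norm (h z) \<le> C * exp (c * norm z)"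
    and xi: "Re \<xi> \<ge> 0" "Im \<xi> \<ge> 0"
  shows "norm (h \<xi>) \<le> M"
proof (cases "Re \<xi> = 0 \<or> Im \<xi> = 0")
  case True then show ?thesis using bdry xi by auto
next
  case False
  define T where "T = {z. Re z \<ge> 0 \<and> Im z \<ge> 0}"
  define D where "D = {z. Re z > 0 \<and> Im z > 0}"
  have xiD: "\<xi> \<in> D" using xi False by (auto simp: D_def)
  define W where "W z = (1 - \<i>) * z + 1" for z
  define \<phi> where "\<phi> z = W z * Ln (W z)" for z
  define c0 where "c0 = exp (pi/2) * (pi/2)"
  have WRe: "Re (W z) = Re z + Im z + 1" and WIm: "Im (W z) = Im z - Re z" for z
    by (simp_all add: W_def)
  have WT: "Re (W z) \<ge> 1" "\<bar>Im (W z)\<bar> \<le> Re (W z)" "Re (W z) \<ge> norm z" if "z \<in> T" for z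
    using that cmod_le[of z] by (auto simp: T_def WRe WIm)
  have phi_low: "Re (\<phi> z) \<ge> Re (W z) * (ln (Re (W z)) - pi/2)" if "z \<in> T" for z
    unfolding \<phi>_def by (rule wLn_lower) (use WT[OF that] in auto)
  have phi_c0: "Re (\<phi> z) \<ge> - c0" if "z \<in> T" for z
    using phi_low[OF that] f_lower[of "Re (W z)"] WT[OF that] by (simp add: c0_def)
  have "norm (h 0) \<le> M" using bdry[of 0] by simp
  then have M0: "M \<ge> 0" using norm_ge_zero order_trans by blast
  have "norm (h 0) \<le> C" using growth[of 0] by simp
  then have C0: "C \<ge> 0" using norm_ge_zero order_trans by blast
  have Wne: "W z \<notin> \<real>\<^sub>\<le>\<^sub>0" if "z \<in> T" for z
    using WT(1)[OF that] by (auto simp: complex_nonpos_Reals_iff)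
  have key: "norm (h \<xi>) \<le> M * exp (\<eta> * (c0 + norm (\<phi> \<xi>)))" if \<eta>: "\<eta> > 0" for \<eta>
  proof -
    define k where "k z = h z * exp (- (of_real \<eta> * \<phi> z))" for z
    have nk: "norm (k z) = norm (h z) * exp (- (\<eta> * Re (\<phi> z)))" for z
      by (simp add: k_def norm_mult norm_exp)
    have kb: "norm (k \<xi>) \<le> M * exp (\<eta> * c0)"
    proof (rule mm_trunc[of D T k])
      show "open D" unfolding D_def
        by (intro open_Collect_conj open_Collect_less continuous_intros)
      show "D \<subseteq> T" by (auto simp: D_def T_def)
      show "closed T" unfolding T_def
        by (intro closed_Collect_conj closed_Collect_le continuous_intros)
      have DT: "D \<subseteq> T" by (auto simp: D_def T_def)
      show "k holomorphic_on D" unfolding k_def[abs_def] \<phi>_def[abs_def]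
        using holo Wne DT unfolding D_def[symmetric]
        by (intro holomorphic_intros holomorphic_on_Ln) (auto simp: W_def intro!: holomorphic_intros)
      show "continuous_on T k" unfolding k_def[abs_def] \<phi>_def[abs_def]
        using cont Wne unfolding T_def[symmetric]
        by (intro continuous_intros continuous_on_Ln) (auto simp: W_def intro!: continuous_intros)
      show "norm (k z) \<le> M * exp (\<eta> * c0)" if "z \<in> T" "z \<notin> D" for z
      proof -
        have "norm (h z) \<le> M" using that by (intro bdry) (auto simp: T_def D_def)
        moreover have "exp (- (\<eta> * Re (\<phi> z))) \<le> exp (\<eta> * c0)"
        proof -
          have "\<eta> * (- Re (\<phi> z)) \<le> \<eta> * c0"
            using phi_c0[OF that(1)] \<eta> by (intro mult_left_mono) auto
          then show ?thesis by simp
        qed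
        ultimately show ?thesis unfolding nk using M0 by (intro mult_mono) auto
      qed
      show "\<exists>R>r. \<forall>z\<in>T. norm z = R \<longrightarrow> norm (k z) \<le> M * exp (\<eta> * c0) + e"
        if e: "e > 0" for e r
      proof -
        have lim: "((\<lambda>R. C * exp (c * R - \<eta> * (R * (ln R - pi/2)))) \<longlongrightarrow> 0) at_top"
          using \<eta> by real_asymp
        have ev1: "eventually (\<lambda>R. C * exp (c * R - \<eta> * (R * (ln R - pi/2))) < e) at_top"
          using order_tendstoD(2)[OF lim e] .
        have ev2: "eventually (\<lambda>R. R > r \<and> R \<ge> exp (pi/2)) at_top"
          by (intro eventually_conj eventually_gt_at_top eventually_ge_at_top)
        obtain R where R: "R > r" "R \<ge> exp (pi/2)" "C * exp (c * R - \<eta> * (R * (ln R - pi/2))) < e"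
          using eventually_happens[OF eventually_conj[OF ev1 ev2]] by auto
        have "norm (k z) \<le> M * exp (\<eta> * c0) + e" if z: "z \<in> T" "norm z = R" for z
        proof -
          have "R * (ln R - pi/2) \<le> Re (W z) * (ln (Re (W z)) - pi/2)"
            using WT(3)[OF z(1)] z(2) R(2) by (intro f_mono) auto
          then have "Re (\<phi> z) \<ge> R * (ln R - pi/2)" using phi_low[OF z(1)] by linarith
          then have "exp (- (\<eta> * Re (\<phi> z))) \<le> exp (- (\<eta> * (R * (ln R - pi/2))))"
            using \<eta> by (simp add: mult_left_mono)
          moreover have "norm (h z) \<le> C * exp (c * R)"
            using growth[of z] z by (auto simp: T_def)
          ultimately have "norm (k z) \<le> C * exp (c * R) * exp (- (\<eta> * (R * (ln R - pi/2))))"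
            unfolding nk using C0 by (intro mult_mono) auto
          also have "\<dots> = C * exp (c * R - \<eta> * (R * (ln R - pi/2)))"
          proof -
            have "exp (c * R) * exp (- (\<eta> * (R * (ln R - pi/2)))) = exp (c * R - \<eta> * (R * (ln R - pi/2)))"
              by (subst exp_add[symmetric]) simp
            then show ?thesis by (simp add: mult.assoc)
          qed
          also have "\<dots> \<le> M * exp (\<eta> * c0) + e" using R(3) M0 by (smt (verit) exp_gt_zero mult_nonneg_nonneg)
          finally show ?thesis .
        qed
        then show ?thesis using R(1) by blast
      qed
      show "\<xi> \<in> D" by (rule xiD)
    qed
    have "norm (h \<xi>) = norm (k \<xi>) * exp (\<eta> * Re (\<phi> \<xi>))"
      unfolding nk by (simp add: exp_minus)
    also have "\<dots> \<le> M * exp (\<eta> * c0) * exp (\<eta> * norm (\<phi> \<xi>))"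
      using kb \<eta> complex_Re_le_cmod[of "\<phi> \<xi>"] M0 by (intro mult_mono) (auto simp: mult_left_mono)
    also have "\<dots> = M * exp (\<eta> * (c0 + norm (\<phi> \<xi>)))"
      by (simp add: distrib_left exp_add)
    finally show ?thesis .
  qed
  then show ?thesis by (rule limit_le_from_above)
qed



lemma PL_half:
  fixes h :: "complex \<Rightarrow> complex" and M B :: real
  assumes holo: "h holomorphic_on {z. Im z > 0}" and cont: "continuous_on {z. Im z \<ge> 0} h"
    and bdd: "\<And>z. Im z \<ge> 0 \<Longrightarrow> norm (h z) \<le> M"
    and bdry: "\<And>z. Im z = 0 \<Longrightarrow> norm (h z) \<le> B"
    and xi: "Im \<xi> \<ge> 0"
  shows "norm (h \<xi>) \<le> B"
proof (cases "Im \<xi> = 0")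
  case True then show ?thesis using bdry by auto
next
  case False
  define T where "T = {z. Im z \<ge> 0}"
  define D where "D = {z. Im z > 0}"
  have xiD: "\<xi> \<in> D" using xi False by (auto simp: D_def)
  have "norm (h 0) \<le> B" using bdry[of 0] by simp
  then have B0: "B \<ge> 0" using norm_ge_zero order_trans by blast
  have "norm (h 0) \<le> M" using bdd[of 0] by simp
  then have M0: "M \<ge> 0" using norm_ge_zero order_trans by blast
  have key: "norm (h \<xi>) \<le> B * exp (\<eta> * norm \<xi>)" if \<eta>: "\<eta> > 0" for \<eta>
  proof -
    define q where "q z = \<i> + of_real \<eta> * z" for z
    have qIm: "Im (q z) = 1 + \<eta> * Im z" for z by (simp add: q_def)
    have q1: "norm (q z) \<ge> 1" if "z \<in> T" for z
    proof -
      have "1 \<le> 1 + \<eta> * Im z" using that \<eta> by (simp add: T_def)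
      also have "\<dots> \<le> norm (q z)" using abs_Im_le_cmod[of "q z"] qIm[of z] by simp
      finally show ?thesis .
    qed
    have q0: "q z \<noteq> 0" if "z \<in> T" for z using q1[OF that] by auto
    define k where "k z = h z * (\<i> / q z)" for z
    have nk: "norm (k z) = norm (h z) / norm (q z)" for z by (simp add: k_def norm_divide norm_mult)
    have kle: "norm (k z) \<le> norm (h z)" if "z \<in> T" for z
      unfolding nk using q1[OF that] by (simp add: divide_le_eq mult_le_cancel_left1)
    have DT: "D \<subseteq> T" by (auto simp: D_def T_def)
    have kb: "norm (k \<xi>) \<le> B"
    proof (rule mm_trunc[of D T k])
      show "open D" unfolding D_def by (intro open_Collect_less continuous_intros)
      show "D \<subseteq> T" by (rule DT)
      show "closed T" unfolding T_def by (intro closed_Collect_le continuous_intros)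
      have qD: "\<i> + of_real \<eta> * z \<noteq> 0" if "z \<in> D" for z
      proof -
        have "z \<in> T" using that DT by blast
        then have "q z \<noteq> 0" by (rule q0)
        then show ?thesis unfolding q_def .
      qed
      have "(\<lambda>z. \<i> / (\<i> + of_real \<eta> * z)) holomorphic_on D"
      proof (rule holomorphic_on_divide)
        show "(\<lambda>z. \<i> + of_real \<eta> * z) holomorphic_on D" by (intro holomorphic_intros)
      qed (use qD in auto)
      moreover have "h holomorphic_on D" using holo by (simp add: D_def)
      ultimately show "k holomorphic_on D" unfolding k_def[abs_def] q_def
        by (rule holomorphic_on_mult[rotated])
      have qT: "\<i> + of_real \<eta> * z \<noteq> 0" if "z \<in> T" for z
        using q0[OF that] unfolding q_def .
      have "continuous_on T (\<lambda>z. \<i> / (\<i> + of_real \<eta> * z))"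
      proof (rule continuous_on_divide)
        show "continuous_on T (\<lambda>z. \<i> + of_real \<eta> * z)" by (intro continuous_intros)
      qed (use qT in auto)
      moreover have "continuous_on T h" using cont by (simp add: T_def)
      ultimately show "continuous_on T k" unfolding k_def[abs_def] q_def
        by (rule continuous_on_mult[rotated])
      show "norm (k z) \<le> B" if "z \<in> T" "z \<notin> D" for z
        using kle[OF that(1)] bdry[of z] that by (auto simp: T_def D_def)
      show "\<exists>R>r. \<forall>z\<in>T. norm z = R \<longrightarrow> norm (k z) \<le> B + e" if e: "e > 0" for e r
      proof -
        define R where "R = \<bar>r\<bar> + 1 + (M / e + 1) / \<eta>"
        have "(M / e + 1) / \<eta> > 0" using e \<eta> M0 by (simp add: add_nonneg_pos)
        then have R: "R > r" by (simp add: R_def)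
        have eR: "\<eta> * R - 1 > M / e"
        proof -
          have aux: "\<eta> * ((M / e + 1) / \<eta>) = M / e + 1" using \<eta> by simp
          have "\<eta> * R = \<eta> * (\<bar>r\<bar> + 1) + (M / e + 1)" unfolding R_def distrib_left aux by simp
          moreover have "\<eta> * (\<bar>r\<bar> + 1) > 0" using \<eta> by simp
          ultimately show ?thesis by linarith
        qed
        have "norm (k z) \<le> B + e" if z: "z \<in> T" "norm z = R" for z
        proof -
          have "norm (q z) \<ge> \<eta> * R - 1"
          proof -
            have "norm (of_real \<eta> * z) \<le> norm (q z) + norm \<i>"
              using norm_triangle_ineq4[of "q z" "\<i>"] by (simp add: q_def)
            then show ?thesis using z \<eta> by (simp add: norm_mult)
          qed
          moreover have pos: "\<eta> * R - 1 > 0"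
          proof -
            have "M / e \<ge> 0" using e M0 by simp
            then show ?thesis using eR by linarith
          qed
          ultimately have "norm (k z) \<le> M / (\<eta> * R - 1)"
            unfolding nk using bdd[of z] z M0 by (intro frac_le) (auto simp: T_def)
          also have "\<dots> \<le> e"
          proof -
            have "M < (\<eta> * R - 1) * e" using eR e by (simp add: pos_divide_less_eq)
            then show ?thesis using pos by (simp add: pos_divide_le_eq mult.commute)
          qed
          finally show ?thesis using B0 by simp
        qed
        then show ?thesis using R by blast
      qed
      show "\<xi> \<in> D" by (rule xiD)
    qed
    have "norm (h \<xi>) = norm (k \<xi>) * norm (q \<xi>)" unfolding nk using q0[of \<xi>] xiD DT by auto
    also have "\<dots> \<le> B * (1 + \<eta> * norm \<xi>)"
    proof (rule mult_mono)
      show "norm (q \<xi>) \<le> 1 + \<eta> * norm \<xi>"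
        using norm_triangle_ineq[of \<i> "of_real \<eta> * \<xi>"] \<eta> by (simp add: q_def norm_mult)
    qed (use kb B0 in auto)
    also have "\<dots> \<le> B * exp (\<eta> * norm \<xi>)"
      using B0 by (intro mult_left_mono) (auto simp: add.commute exp_ge_add_one_self)
    finally show ?thesis .
  qed
  then show ?thesis by (rule limit_le_from_above)
qed

lemma PL_upper:
  fixes g :: "complex \<Rightarrow> complex" and a B :: real
  assumes holo: "g holomorphic_on {z. Im z > 0}" and cont: "continuous_on {z. Im z \<ge> 0} g"
    and a: "a \<ge> 0"
    and bdry: "\<And>x. norm (g (of_real x)) \<le> B"
    and growth: "\<And>\<epsilon>. \<epsilon> > 0 \<Longrightarrow> \<exists>C. \<forall>z. Im z \<ge> 0 \<longrightarrow> norm (g z) \<le> C * exp ((a + \<epsilon>) * norm z)"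
    and z: "Im z \<ge> 0"
  shows "norm (g z) \<le> B * exp (a * Im z)"
proof -
  have "norm (g z) \<le> (B * exp (a * Im z)) * exp (\<epsilon> * Im z)" if \<epsilon>: "\<epsilon> > 0" for \<epsilon>
  proof -
    obtain C where C: "\<And>w. Im w \<ge> 0 \<Longrightarrow> norm (g w) \<le> C * exp ((a + \<epsilon>) * norm w)"
      using growth[OF \<epsilon>] by blast
    define b where "b = a + \<epsilon>"
    have b: "b > 0" using a \<epsilon> by (simp add: b_def)
    have "norm (g 0) \<le> C" using C[of 0] by simp
    then have C0: "C \<ge> 0" using norm_ge_zero order_trans by blast
    define h where "h w = g w * exp (\<i> * of_real b * w)" for w
    have nh: "norm (h w) = norm (g w) * exp (- (b * Im w))" for w
      by (simp add: h_def norm_mult norm_exp)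
    have hholo: "h holomorphic_on {w. Im w > 0}"
      unfolding h_def[abs_def] by (intro holomorphic_intros holo)
    have hcont: "continuous_on {w. Im w \<ge> 0} h"
      unfolding h_def[abs_def] by (intro continuous_intros cont)
    have hgrow: "norm (h w) \<le> C * exp (b * norm w)" if "Im w \<ge> 0" for w
    proof -
      have "exp (- (b * Im w)) \<le> 1" using b that by simp
      moreover have "norm (g w) \<le> C * exp (b * norm w)" using C[OF that] by (simp add: b_def)
      ultimately have "norm (g w) * exp (- (b * Im w)) \<le> C * exp (b * norm w) * 1"
        using C0 by (intro mult_mono) auto
      then show ?thesis unfolding nh by simp
    qed
    have hreal: "norm (h w) \<le> B" if "Im w = 0" for w
    proof -
      have "w = of_real (Re w)" using that by (simp add: complex_eq_iff)
      then have "norm (g w) \<le> B" using bdry[of "Re w"] by simp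
      then show ?thesis unfolding nh using that by simp
    qed
    have himag: "norm (h w) \<le> C" if "Re w = 0" "Im w \<ge> 0" for w
    proof -
      have nw: "norm w = Im w" using that by (simp add: cmod_eq_Im)
      have "norm (h w) \<le> C * exp (b * Im w) * exp (- (b * Im w))"
        unfolding nh using C[OF that(2)] nw by (intro mult_right_mono) (auto simp: b_def)
      also have "\<dots> = C" by (simp add: mult.assoc exp_minus)
      finally show ?thesis .
    qed
    define M where "M = max B C"
    have Q1: "norm (h w) \<le> M" if "Re w \<ge> 0" "Im w \<ge> 0" for w
    proof (rule PL_quadrant[of h M C b])
      show "h holomorphic_on {z. 0 < Re z \<and> 0 < Im z}"
        by (rule holomorphic_on_subset[OF hholo]) auto
      show "continuous_on {z. 0 \<le> Re z \<and> 0 \<le> Im z} h"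
        by (rule continuous_on_subset[OF hcont]) auto
      show "norm (h z) \<le> M" if "0 \<le> Re z" "0 \<le> Im z" "Re z = 0 \<or> Im z = 0" for z
        using that himag[of z] hreal[of z] by (auto simp: M_def)
      show "norm (h z) \<le> C * exp (b * norm z)" if "0 \<le> Re z" "0 \<le> Im z" for z
        using hgrow that by auto
    qed (use that in auto)
    have Q2: "norm (h (\<i> * w)) \<le> M" if "Re w \<ge> 0" "Im w \<ge> 0" for w
    proof (rule PL_quadrant[of "\<lambda>w. h (\<i> * w)" M C b])
      have "(h \<circ> (\<lambda>w. \<i> * w)) holomorphic_on {z. 0 < Re z \<and> 0 < Im z}"
        by (rule holomorphic_on_compose) (auto intro!: holomorphic_intros holomorphic_on_subset[OF hholo])
      then show "(\<lambda>w. h (\<i> * w)) holomorphic_on {z. 0 < Re z \<and> 0 < Im z}" by (simp add: o_def)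
      have "continuous_on {z. 0 \<le> Re z \<and> 0 \<le> Im z} (h \<circ> (\<lambda>w. \<i> * w))"
        by (rule continuous_on_compose) (auto intro!: continuous_intros continuous_on_subset[OF hcont])
      then show "continuous_on {z. 0 \<le> Re z \<and> 0 \<le> Im z} (\<lambda>w. h (\<i> * w))" by (simp add: o_def)
      show "norm (h (\<i> * z)) \<le> M" if "0 \<le> Re z" "0 \<le> Im z" "Re z = 0 \<or> Im z = 0" for z
        using that himag[of "\<i> * z"] hreal[of "\<i> * z"] by (auto simp: M_def)
      show "norm (h (\<i> * z)) \<le> C * exp (b * norm z)" if "0 \<le> Re z" "0 \<le> Im z" for z
        using hgrow[of "\<i> * z"] that by (simp add: norm_mult)
    qed (use that in auto)
    have hM: "norm (h w) \<le> M" if "Im w \<ge> 0" for w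
    proof (cases "Re w \<ge> 0")
      case True then show ?thesis using Q1 that by auto
    next
      case False
      have "w = \<i> * (- \<i> * w)" by simp
      moreover have "norm (h (\<i> * (- \<i> * w))) \<le> M" using False that by (intro Q2) auto
      ultimately show ?thesis by simp
    qed
    have hz: "norm (h z) \<le> B" by (rule PL_half[OF hholo hcont hM hreal z])
    have "norm (g z) = norm (h z) * exp (b * Im z)" unfolding nh by (simp add: exp_minus)
    also have "\<dots> \<le> B * exp (b * Im z)" using hz by (intro mult_right_mono) auto
    also have "\<dots> = (B * exp (a * Im z)) * exp (\<epsilon> * Im z)"
      by (simp add: b_def distrib_right exp_add)
    finally show ?thesis .
  qed
  then show ?thesis by (rule limit_le_from_above)
qed



lemma real_line_bound:
  fixes F \<Phi> :: "complex \<Rightarrow> complex" and u v :: real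
  assumes \<Phi>: "\<And>x. (\<Phi> has_field_derivative F x) (at x)"
    and Fc: "continuous_on UNIV F"
    and int: "integrable lborel (\<lambda>x::real. (norm (F (of_real x)))\<^sup>2)"
    and uv: "u \<le> v"
  shows "norm (\<Phi> (of_real v) - \<Phi> (of_real u))
          \<le> ((\<integral>x. (norm (F (of_real x)))\<^sup>2 \<partial>lborel) + (v - u)) / 2"
proof -
  define f where "f t = F (of_real t)" for t :: real
  define q where "q t = (norm (f t))\<^sup>2" for t
  define A where "A = integral\<^sup>L lborel q"
  have fc: "continuous_on UNIV f" unfolding f_def
    by (intro continuous_on_compose2[OF Fc] continuous_intros) auto
  have hi: "(f has_integral ((\<Phi> \<circ> of_real) v - (\<Phi> \<circ> of_real) u)) {u..v}"
  proof (rule fundamental_theorem_of_calculus[OF uv])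
    fix t assume "t \<in> {u..v}"
    show "((\<Phi> \<circ> of_real) has_vector_derivative f t) (at t within {u..v})"
      unfolding f_def
      by (rule has_complex_derivative_imp_has_vector_derivative)
         (rule has_field_derivative_at_within[OF \<Phi>])
  qed
  have qc: "continuous_on UNIV q" unfolding q_def by (intro continuous_intros fc)
  have qi_uv: "q integrable_on {u..v}"
    by (rule integrable_continuous_interval, rule continuous_on_subset[OF qc]) auto
  have qUNIV: "(q has_integral A) UNIV"
    using has_integral_integral_lborel[OF int] unfolding A_def q_def f_def .
  have qle: "integral {u..v} q \<le> A"
  proof -
    have "integral {u..v} q \<le> integral UNIV q"
      by (rule integral_subset_le) (use qi_uv qUNIV in \<open>auto simp: q_def\<close>)
    then show ?thesis using integral_unique[OF qUNIV] by simp
  qed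
  have "norm (\<Phi> (of_real v) - \<Phi> (of_real u)) = norm (integral {u..v} f)"
    by (simp add: integral_unique[OF hi])
  also have "\<dots> \<le> integral {u..v} (\<lambda>t. (q t + 1) / 2)"
  proof (rule integral_norm_bound_integral)
    show "f integrable_on {u..v}" using hi by blast
    show "(\<lambda>t. (q t + 1) / 2) integrable_on {u..v}"
      by (rule integrable_continuous_interval) (intro continuous_intros continuous_on_subset[OF qc], auto)
    fix t
    have "0 \<le> (norm (f t) - 1)\<^sup>2" by simp
    then show "norm (f t) \<le> (q t + 1) / 2" by (simp add: q_def power2_eq_square algebra_simps)
  qed
  also have "integral {u..v} (\<lambda>t. (q t + 1) / 2) = (integral {u..v} q + (v - u)) / 2"
  proof -
    have "((\<lambda>t. (q t + 1) / 2) has_integral (integral {u..v} q + measure lborel {u..v} *\<^sub>R 1) / 2) {u..v}"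
      by (intro has_integral_divide has_integral_add integrable_integral qi_uv has_integral_const_real)
    then have "((\<lambda>t. (q t + 1) / 2) has_integral (integral {u..v} q + (v - u)) / 2) {u..v}"
      using uv by simp
    then show ?thesis by (rule integral_unique)
  qed
  also have "\<dots> \<le> (A + (v - u)) / 2" using qle by simp
  finally show ?thesis by (simp add: A_def q_def[abs_def] f_def)
qed

lemma half_bound:
  fixes F \<Phi> :: "complex \<Rightarrow> complex" and a :: real
  assumes \<Phi>: "\<And>x. (\<Phi> has_field_derivative F x) (at x)"
    and holo: "F holomorphic_on UNIV"
    and et: "exp_type_le a F" and a: "a \<ge> 0"
    and int: "integrable lborel (\<lambda>x::real. (norm (F (of_real x)))\<^sup>2)"
  shows "\<exists>K. \<forall>z. Im z \<ge> 0 \<longrightarrow> norm (\<Phi> z - \<Phi> 0) \<le> K * (1 + norm z) * exp (a * Im z)"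
proof -
  define A where "A = (\<integral>x. (norm (F (of_real x)))\<^sup>2 \<partial>lborel)"
  have A0: "A \<ge> 0" unfolding A_def by (rule Bochner_Integration.integral_nonneg) simp
  have Fc: "continuous_on UNIV F" by (rule holomorphic_on_imp_continuous_on[OF holo])
  have rl: "norm (\<Phi> (of_real x) - \<Phi> 0) \<le> (A + \<bar>x\<bar>) / 2" for x
  proof (cases "x \<ge> 0")
    case True
    then show ?thesis using real_line_bound[OF \<Phi> Fc int, of 0 x] by (simp add: A_def)
  next
    case False
    then have "norm (\<Phi> 0 - \<Phi> (of_real x)) \<le> (A + \<bar>x\<bar>) / 2"
      using real_line_bound[OF \<Phi> Fc int, of x 0] by (simp add: A_def)
    then show ?thesis by (simp add: norm_minus_commute)
  qed
  have zi: "z + \<i> \<noteq> 0" "norm (z + \<i>) \<ge> 1" if "Im z \<ge> 0" for z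
  proof -
    have "1 \<le> Im (z + \<i>)" using that by simp
    also have "\<dots> \<le> norm (z + \<i>)" using abs_Im_le_cmod[of "z + \<i>"] by simp
    finally show "norm (z + \<i>) \<ge> 1" .
    then show "z + \<i> \<noteq> 0" by auto
  qed
  have \<Phi>holo: "\<Phi> holomorphic_on UNIV"
    using \<Phi> by (auto simp: holomorphic_on_open)
  define G where "G z = (\<Phi> z - \<Phi> 0) / (z + \<i>)" for z
  have Gholo: "G holomorphic_on {z. Im z > 0}" unfolding G_def[abs_def]
  proof (rule holomorphic_on_divide)
    show "(\<lambda>z. \<Phi> z - \<Phi> 0) holomorphic_on {z. 0 < Im z}"
      by (intro holomorphic_intros holomorphic_on_subset[OF \<Phi>holo]) auto
    show "(\<lambda>z. z + \<i>) holomorphic_on {z. 0 < Im z}" by (intro holomorphic_intros)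
  qed (use zi in auto)
  have Gcont: "continuous_on {z. Im z \<ge> 0} G" unfolding G_def[abs_def]
  proof (rule continuous_on_divide)
    show "continuous_on {z. 0 \<le> Im z} (\<lambda>z. \<Phi> z - \<Phi> 0)"
      by (intro continuous_intros continuous_on_subset[OF holomorphic_on_imp_continuous_on[OF \<Phi>holo]]) auto
    show "continuous_on {z. 0 \<le> Im z} (\<lambda>z. z + \<i>)" by (intro continuous_intros)
  qed (use zi in auto)
  have Gbd: "norm (G (of_real x)) \<le> (A + 1) / 2" for x
  proof -
    define n where "n = norm (of_real x + \<i>)"
    have n1: "n \<ge> 1" using zi(2)[of "of_real x"] by (simp add: n_def)
    have nx: "n \<ge> \<bar>x\<bar>" using abs_Re_le_cmod[of "of_real x + \<i>"] by (simp add: n_def)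
    have "norm (G (of_real x)) = norm (\<Phi> (of_real x) - \<Phi> 0) / n" by (simp add: G_def n_def norm_divide)
    also have "\<dots> \<le> ((A + \<bar>x\<bar>) / 2) / n" using n1 rl[of x] by (intro divide_right_mono) auto
    also have "\<dots> = (A / n + \<bar>x\<bar> / n) / 2" using n1 by (simp add: field_simps)
    also have "\<dots> \<le> (A + 1) / 2"
    proof -
      have "A / n \<le> A" using n1 A0 by (simp add: divide_le_eq mult_le_cancel_left1 mult.commute)
      moreover have "\<bar>x\<bar> / n \<le> 1" using n1 nx by simp
      ultimately show ?thesis by (intro divide_right_mono add_mono) auto
    qed
    finally show ?thesis .
  qed
  have Ggrow: "\<exists>C. \<forall>z. Im z \<ge> 0 \<longrightarrow> norm (G z) \<le> C * exp ((a + \<epsilon>) * norm z)" if \<epsilon>: "\<epsilon> > 0" for \<epsilon>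
  proof -
    obtain C where C: "\<And>w. norm (F w) \<le> C * exp ((a + \<epsilon>/2) * norm w)"
      using et \<epsilon> unfolding exp_type_le_def by (metis half_gt_zero)
    have "norm (F 0) \<le> C" using C[of 0] by simp
    then have C0: "C \<ge> 0" using norm_ge_zero order_trans by blast
    have "norm (G z) \<le> (2 * C / \<epsilon>) * exp ((a + \<epsilon>) * norm z)" if z: "Im z \<ge> 0" for z
    proof -
      have "norm (\<Phi> z - \<Phi> 0) \<le> C * exp ((a + \<epsilon>/2) * norm z) * norm (z - 0)"
      proof (rule has_contour_integral_bound_linepath)
        show "(F has_contour_integral \<Phi> z - \<Phi> 0) (linepath 0 z)" by (rule entire_linepath[OF \<Phi>])
        show "0 \<le> C * exp ((a + \<epsilon> / 2) * norm z)" using C0 by simp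
        fix w assume "w \<in> closed_segment 0 z"
        then obtain u where u: "0 \<le> u" "u \<le> 1" "w = u *\<^sub>R z" by (auto simp: in_segment)
        then have "norm w \<le> norm z" by (simp add: mult_left_le_one_le)
        then have "exp ((a + \<epsilon>/2) * norm w) \<le> exp ((a + \<epsilon>/2) * norm z)"
          using a \<epsilon> by (simp add: mult_left_mono)
        then show "norm (F w) \<le> C * exp ((a + \<epsilon>/2) * norm z)"
          using C[of w] C0 by (meson mult_left_mono order_trans)
      qed
      also have "\<dots> \<le> C * exp ((a + \<epsilon>/2) * norm z) * ((2 / \<epsilon>) * exp ((\<epsilon>/2) * norm z))"
      proof (rule mult_left_mono)
        have "(\<epsilon>/2) * norm z \<le> exp ((\<epsilon>/2) * norm z)"
          using exp_ge_add_one_self[of "(\<epsilon>/2) * norm z"] by linarith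
        then show "norm (z - 0) \<le> (2 / \<epsilon>) * exp ((\<epsilon>/2) * norm z)"
          using \<epsilon> by (simp add: field_simps)
      qed (use C0 in simp)
      also have "\<dots> = (2 * C / \<epsilon>) * exp ((a + \<epsilon>) * norm z)"
      proof -
        have "exp ((a + \<epsilon>/2) * norm z) * exp ((\<epsilon>/2) * norm z) = exp ((a + \<epsilon>) * norm z)"
          by (subst exp_add[symmetric]) (simp add: algebra_simps)
        then show ?thesis by (simp add: field_simps)
      qed
      finally have "norm (\<Phi> z - \<Phi> 0) \<le> (2 * C / \<epsilon>) * exp ((a + \<epsilon>) * norm z)" .
      moreover have "norm (G z) \<le> norm (\<Phi> z - \<Phi> 0)"
        using zi[OF z] by (simp add: G_def norm_divide divide_le_eq mult_le_cancel_left1)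
      ultimately show ?thesis by linarith
    qed
    then show ?thesis by blast
  qed
  have "norm (\<Phi> z - \<Phi> 0) \<le> (A + 1) / 2 * (1 + norm z) * exp (a * Im z)" if z: "Im z \<ge> 0" for z
  proof -
    have Gz: "norm (G z) \<le> (A + 1) / 2 * exp (a * Im z)"
      by (rule PL_upper[OF Gholo Gcont a Gbd Ggrow z])
    have "norm (\<Phi> z - \<Phi> 0) = norm (G z) * norm (z + \<i>)"
      using zi[OF z] by (simp add: G_def norm_divide)
    also have "\<dots> \<le> ((A + 1) / 2 * exp (a * Im z)) * (1 + norm z)"
    proof (rule mult_mono)
      show "norm (z + \<i>) \<le> 1 + norm z" using norm_triangle_ineq[of z \<i>] by simp
    qed (use Gz A0 in auto)
    finally show ?thesis by (simp add: algebra_simps)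
  qed
  then show ?thesis by blast
qed

lemma PW_bound:
  fixes F :: "complex \<Rightarrow> complex" and a :: real
  assumes PW: "F \<in> PW_space a" and a: "a \<ge> 0"
  shows "\<exists>K\<ge>0. \<forall>z. norm (F z) \<le> K * (1 + norm z) * exp (a * \<bar>Im z\<bar>)"
proof -
  have holo: "F holomorphic_on UNIV" and et: "exp_type_le a F"
    and int: "integrable lborel (\<lambda>x::real. (norm (F (of_real x)))\<^sup>2)"
    using PW by (auto simp: PW_space_def)
  obtain \<Phi> where \<Phi>: "\<And>x. (\<Phi> has_field_derivative F x) (at x)"
    using entire_primitive[OF holo] by blast
  obtain K1 where K1: "\<And>z. Im z \<ge> 0 \<Longrightarrow> norm (\<Phi> z - \<Phi> 0) \<le> K1 * (1 + norm z) * exp (a * Im z)"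
    using half_bound[OF \<Phi> holo et a int] by blast
  define F1 where "F1 z = - F (- z)" for z
  define \<Phi>1 where "\<Phi>1 z = \<Phi> (- z)" for z
  have \<Phi>1: "(\<Phi>1 has_field_derivative F1 x) (at x)" for x
  proof -
    have "((\<lambda>z. \<Phi> (- z)) has_field_derivative F (- x) * (- 1)) (at x)"
      by (rule DERIV_chain2[OF \<Phi>]) (auto intro!: derivative_eq_intros)
    then show ?thesis by (simp add: \<Phi>1_def[abs_def] F1_def)
  qed
  have holo1: "F1 holomorphic_on UNIV"
  proof -
    have "(F \<circ> uminus) holomorphic_on UNIV"
      by (rule holomorphic_on_compose) (auto intro!: holomorphic_intros holomorphic_on_subset[OF holo])
    then show ?thesis unfolding F1_def[abs_def] by (intro holomorphic_intros) (simp add: o_def)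
  qed
  have et1: "exp_type_le a F1"
    using et unfolding exp_type_le_def F1_def by (metis norm_minus_cancel)
  have int1: "integrable lborel (\<lambda>x::real. (norm (F1 (of_real x)))\<^sup>2)"
    using lborel_integrable_real_affine_iff[of "-1" "\<lambda>x::real. (norm (F (of_real x)))\<^sup>2" 0] int
    by (simp add: F1_def)
  obtain K2 where K2: "\<And>z. Im z \<ge> 0 \<Longrightarrow> norm (\<Phi>1 z - \<Phi>1 0) \<le> K2 * (1 + norm z) * exp (a * Im z)"
    using half_bound[OF \<Phi>1 holo1 et1 a int1] by blast
  define K3 where "K3 = max (max K1 K2) 0"
  have K3: "K3 \<ge> 0" by (simp add: K3_def)
  have Pb: "norm (\<Phi> w - \<Phi> 0) \<le> K3 * (1 + norm w) * exp (a * \<bar>Im w\<bar>)" for w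
  proof (cases "Im w \<ge> 0")
    case True
    then have "norm (\<Phi> w - \<Phi> 0) \<le> K1 * (1 + norm w) * exp (a * Im w)" by (rule K1)
    also have "\<dots> \<le> K3 * (1 + norm w) * exp (a * Im w)"
      by (intro mult_right_mono) (auto simp: K3_def add_nonneg_nonneg)
    finally show ?thesis using True by simp
  next
    case False
    then have "norm (\<Phi>1 (- w) - \<Phi>1 0) \<le> K2 * (1 + norm (- w)) * exp (a * Im (- w))" by (intro K2) auto
    then have "norm (\<Phi> w - \<Phi> 0) \<le> K2 * (1 + norm w) * exp (a * \<bar>Im w\<bar>)"
      using False by (simp add: \<Phi>1_def)
    also have "\<dots> \<le> K3 * (1 + norm w) * exp (a * \<bar>Im w\<bar>)"
      by (intro mult_right_mono) (auto simp: K3_def add_nonneg_nonneg)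
    finally show ?thesis .
  qed
  have \<Phi>holo: "\<Phi> holomorphic_on UNIV"
    using \<Phi> by (auto simp: holomorphic_on_open)
  have "norm (F z) \<le> (2 * K3 * exp a) * (1 + norm z) * exp (a * \<bar>Im z\<bar>)" for z
  proof -
    define f where "f w = \<Phi> w - \<Phi> 0" for w
    have fh: "f holomorphic_on UNIV" unfolding f_def[abs_def] by (intro holomorphic_intros \<Phi>holo)
    have "deriv f z = F z"
      unfolding f_def[abs_def] by (rule DERIV_imp_deriv) (auto intro!: derivative_eq_intros \<Phi>)
    moreover have "norm ((deriv ^^ 1) f z) \<le> fact 1 * (K3 * (2 + norm z) * exp (a * (\<bar>Im z\<bar> + 1))) / 1 ^ 1"
    proof (rule Cauchy_inequality)
      show "f holomorphic_on ball z 1" using fh holomorphic_on_subset by blast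
      show "continuous_on (cball z 1) f"
        using holomorphic_on_imp_continuous_on[OF fh] continuous_on_subset by blast
      fix w assume w: "norm (z - w) = 1"
      have "norm w \<le> norm z + 1" using norm_triangle_ineq2[of w z] w by (simp add: norm_minus_commute)
      moreover have "\<bar>Im w\<bar> \<le> \<bar>Im z\<bar> + 1"
        using abs_Im_le_cmod[of "z - w"] w by simp
      ultimately have "K3 * (1 + norm w) * exp (a * \<bar>Im w\<bar>) \<le> K3 * (2 + norm z) * exp (a * (\<bar>Im z\<bar> + 1))"
        using K3 a by (intro mult_mono mult_left_mono) (auto simp: mult_left_mono)
      then show "norm (f w) \<le> K3 * (2 + norm z) * exp (a * (\<bar>Im z\<bar> + 1))"
        using Pb[of w] by (simp add: f_def)
    qed auto
    ultimately have "norm (F z) \<le> K3 * (2 + norm z) * exp (a * (\<bar>Im z\<bar> + 1))" by simp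
    also have "\<dots> = K3 * exp a * (2 + norm z) * exp (a * \<bar>Im z\<bar>)"
      by (simp add: distrib_left exp_add algebra_simps)
    also have "\<dots> \<le> K3 * exp a * (2 * (1 + norm z)) * exp (a * \<bar>Im z\<bar>)"
      using K3 by (intro mult_right_mono mult_left_mono) auto
    finally show ?thesis by (simp add: algebra_simps)
  qed
  moreover have "2 * K3 * exp a \<ge> 0" using K3 by simp
  ultimately show ?thesis by blast
qed



lemma csinc_of_real: "csinc (of_real t) = of_real (if t = 0 then 1 else sin t / t)"
  by (simp add: csinc_def sin_of_real[symmetric] del: sin_of_real)

lemma csinc_scaled_bound:
  assumes b: "b > 0"
  shows "\<exists>K>0. \<forall>z. norm (csinc (of_real b * z)) \<le> K * exp (b * \<bar>Im z\<bar>) / (1 + norm z)"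
proof -
  obtain K1 where K1: "K1 > 0" "\<And>z. norm (csinc z) \<le> K1 * exp \<bar>Im z\<bar> / (1 + norm z)"
    using csinc_bound by blast
  define m where "m = min 1 b"
  have m: "m > 0" "m \<le> 1" "m \<le> b" using b by (auto simp: m_def)
  have "norm (csinc (of_real b * z)) \<le> (K1 / m) * exp (b * \<bar>Im z\<bar>) / (1 + norm z)" for z
  proof -
    have "norm (csinc (of_real b * z)) \<le> K1 * exp (b * \<bar>Im z\<bar>) / (1 + b * norm z)"
      using K1(2)[of "of_real b * z"] b by (simp add: norm_mult abs_mult)
    also have "\<dots> \<le> K1 * exp (b * \<bar>Im z\<bar>) / (m * (1 + norm z))"
    proof (rule divide_left_mono)
      show "m * (1 + norm z) \<le> 1 + b * norm z"
        using m by (simp add: algebra_simps) (metis add_mono mult_right_mono norm_ge_zero)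
    qed (use K1 m in \<open>auto intro!: mult_pos_pos add_pos_nonneg\<close>)
    also have "\<dots> = (K1 / m) * exp (b * \<bar>Im z\<bar>) / (1 + norm z)" by simp
    finally show ?thesis .
  qed
  moreover have "K1 / m > 0" using K1 m by simp
  ultimately show ?thesis by blast
qed

lemma sinc_sq_int:
  fixes b :: real
  assumes b: "b > 0"
  shows "integrable lborel (\<lambda>x::real. (norm (csinc (of_real (b * x))))\<^sup>2)"
    and "(\<integral>x. (norm (csinc (of_real (b * x))))\<^sup>2 \<partial>lborel) = pi / b"
proof -
  obtain K where K: "K > 0" "\<And>z. norm (csinc (of_real b * z)) \<le> K * exp (b * \<bar>Im z\<bar>) / (1 + norm z)"
    using csinc_scaled_bound[OF b] by blast
  have holo: "(\<lambda>z. csinc (of_real b * z)) holomorphic_on UNIV"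
  proof -
    have "(csinc \<circ> (\<lambda>z. of_real b * z)) holomorphic_on UNIV"
      by (rule holomorphic_on_compose) (auto intro: holomorphic_intros holomorphic_on_subset[OF csinc_holo])
    then show ?thesis by (simp add: o_def)
  qed
  note cl = CL[OF holo b less_imp_le[OF K(1)] K(2)]
  define s where "s x = (if b * x = 0 then 1 else sin (b * x) / (b * x))" for x
  have eq: "csinc (of_real b * of_real x) * (of_real b * csinc (of_real (b * x))) = of_real (b * (s x)\<^sup>2)" for x
    using csinc_of_real[of "b * x"] by (simp add: s_def power2_eq_square)
  have nq: "(norm (csinc (of_real (b * x))))\<^sup>2 = (s x)\<^sup>2" for x
    using csinc_of_real[of "b * x"] by (simp add: s_def)
  have i1: "integrable lborel (\<lambda>x. b * (s x)\<^sup>2)"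
    using cl(1) unfolding eq complex_of_real_integrable_eq .
  have "complex_of_real b * complex_of_real (\<integral>x. (s x)\<^sup>2 \<partial>lborel) = complex_of_real pi"
    using cl(2) unfolding eq integral_complex_of_real by simp
  then have i2: "b * (\<integral>x. (s x)\<^sup>2 \<partial>lborel) = pi"
    by (simp only: of_real_mult[symmetric] of_real_eq_iff)
  show "integrable lborel (\<lambda>x::real. (norm (csinc (of_real (b * x))))\<^sup>2)"
    unfolding nq using i1 b by simp
  show "(\<integral>x. (norm (csinc (of_real (b * x))))\<^sup>2 \<partial>lborel) = pi / b"
    unfolding nq using i2 b by (simp add: field_simps)
qed

lemma PW_zero:
  fixes F :: "complex \<Rightarrow> complex"
  assumes holo: "F holomorphic_on UNIV"
    and int: "integrable lborel (\<lambda>x::real. (norm (F (of_real x)))\<^sup>2)"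
    and z: "(\<integral>x. (norm (F (of_real x)))\<^sup>2 \<partial>lborel) = 0"
  shows "F w = 0"
proof -
  define q where "q x = (norm (F (of_real x)))\<^sup>2" for x :: real
  have Fc: "continuous_on UNIV F" by (rule holomorphic_on_imp_continuous_on[OF holo])
  have qc: "continuous_on UNIV q" unfolding q_def
    by (intro continuous_intros continuous_on_compose2[OF Fc]) auto
  have qU: "(q has_integral 0) UNIV"
    using has_integral_integral_lborel[OF int] z unfolding q_def by simp
  have real0: "F (of_real x0) = 0" for x0
  proof -
    have qi: "q integrable_on cbox (x0 - 1) (x0 + 1)"
      by (rule integrable_continuous, rule continuous_on_subset[OF qc]) auto
    have "integral (cbox (x0 - 1) (x0 + 1)) q \<le> integral UNIV q"
    proof (rule integral_subset_le)
      show "q integrable_on UNIV" using qU by blast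
      show "\<forall>x\<in>UNIV. 0 \<le> q x" by (simp add: q_def)
    qed (use qi in auto)
    moreover have "integral (cbox (x0 - 1) (x0 + 1)) q \<ge> 0"
      by (rule integral_nonneg[OF qi]) (simp add: q_def)
    ultimately have "integral (cbox (x0 - 1) (x0 + 1)) q = 0" using integral_unique[OF qU] by simp
    then have "(q has_integral 0) (cbox (x0 - 1) (x0 + 1))"
      using qi by (metis has_integral_integral)
    moreover have qcb: "continuous_on (cbox (x0 - 1) (x0 + 1)) q" by (rule continuous_on_subset[OF qc]) auto
    ultimately have "q x0 = 0"
      by (intro has_integral_0_cbox_imp_0[OF qcb]) (auto simp: q_def)
    then show ?thesis by (simp add: q_def)
  qed
  show ?thesis
  proof (rule analytic_continuation[of F UNIV "range of_real" 0])
    show "0 islimpt range complex_of_real"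
    proof (rule islimpt_approachable[THEN iffD2], intro allI impI)
      fix e :: real assume e: "e > 0"
      show "\<exists>x'\<in>range complex_of_real. x' \<noteq> 0 \<and> dist x' 0 < e"
      proof (rule bexI[of _ "of_real (e/2)"])
        show "complex_of_real (e / 2) \<in> range complex_of_real" by (rule rangeI)
      qed (use e in auto)
    qed
  qed (use holo real0 in auto)
qed

lemma aux_alg:
  fixes n K K1 Ea Ed :: real
  assumes "n > 0"
  shows "(K * n * Ea) * (K1 * Ed / n)\<^sup>2 = (K * K1\<^sup>2) * (Ea * Ed ^ 2) / n"
  using assms by (simp add: power2_eq_square field_simps)

lemma main_ineq:
  fixes F :: "complex \<Rightarrow> complex" and \<Delta> :: real
  assumes PW: "F \<in> PW_space (pi * \<Delta>)" and D: "\<Delta> > 0"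
  shows "(norm (F 0))\<^sup>2 \<le> \<Delta> * (\<integral>x. (norm (F (of_real x)))\<^sup>2 \<partial>lborel)"
proof -
  define a where "a = pi * \<Delta>"
  have a: "a > 0" using D by (simp add: a_def)
  have holo: "F holomorphic_on UNIV"
    and int: "integrable lborel (\<lambda>x::real. (norm (F (of_real x)))\<^sup>2)"
    using PW by (auto simp: PW_space_def)
  define A where "A = (\<integral>x. (norm (F (of_real x)))\<^sup>2 \<partial>lborel)"
  have A0: "A \<ge> 0" unfolding A_def by (rule Bochner_Integration.integral_nonneg) simp
  show ?thesis
  proof (cases "A = 0")
    case True
    then have "(\<integral>x. (norm (F (of_real x)))\<^sup>2 \<partial>lborel) = 0" by (simp only: A_def)
    then have "F 0 = 0" by (rule PW_zero[OF holo int])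
    then show ?thesis using D A0 by (simp add: A_def)
  next
    case False
    then have Apos: "A > 0" using A0 by simp
    obtain K where K: "K \<ge> 0" "\<And>z. norm (F z) \<le> K * (1 + norm z) * exp (a * \<bar>Im z\<bar>)"
      using PW_bound[OF PW[folded a_def] less_imp_le[OF a]] by blast
    have core: "(norm (F 0))\<^sup>2 \<le> A * (a + 2 * \<delta>) / pi" if \<delta>: "\<delta> > 0" for \<delta>
    proof -
      define b where "b = a + 2 * \<delta>"
      have b: "b > 0" using a \<delta> by (simp add: b_def)
      obtain K1 where K1: "K1 > 0" "\<And>z. norm (csinc (of_real \<delta> * z)) \<le> K1 * exp (\<delta> * \<bar>Im z\<bar>) / (1 + norm z)"
        using csinc_scaled_bound[OF \<delta>] by blast
      define \<Psi> where "\<Psi> z = F z * (csinc (of_real \<delta> * z))\<^sup>2" for z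
      have cs_holo: "(\<lambda>z. csinc (of_real c * z)) holomorphic_on UNIV" for c
      proof -
        have "(csinc \<circ> (\<lambda>z. of_real c * z)) holomorphic_on UNIV"
          by (rule holomorphic_on_compose) (auto intro: holomorphic_intros holomorphic_on_subset[OF csinc_holo])
        then show ?thesis by (simp add: o_def)
      qed
      have \<Psi>holo: "\<Psi> holomorphic_on UNIV" unfolding \<Psi>_def[abs_def]
        by (intro holomorphic_intros holo cs_holo)
      have \<Psi>bd: "norm (\<Psi> z) \<le> (K * K1\<^sup>2) * exp (b * \<bar>Im z\<bar>) / (1 + norm z)" for z
      proof -
        have p: "1 + norm z > 0" by (simp add: add_pos_nonneg)
        have "norm (\<Psi> z) = norm (F z) * (norm (csinc (of_real \<delta> * z)))\<^sup>2"
          by (simp add: \<Psi>_def norm_mult norm_power)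
        also have "\<dots> \<le> (K * (1 + norm z) * exp (a * \<bar>Im z\<bar>)) * (K1 * exp (\<delta> * \<bar>Im z\<bar>) / (1 + norm z))\<^sup>2"
          by (intro mult_mono K(2) power_mono K1(2)) (use K in auto)
        also have "\<dots> = (K * K1\<^sup>2) * (exp (a * \<bar>Im z\<bar>) * exp (\<delta> * \<bar>Im z\<bar>) ^ 2) / (1 + norm z)"
          by (rule aux_alg[OF p])
        also have "exp (a * \<bar>Im z\<bar>) * exp (\<delta> * \<bar>Im z\<bar>) ^ 2 = exp (b * \<bar>Im z\<bar>)"
          by (simp add: b_def power2_eq_square exp_add[symmetric] algebra_simps)
        finally show ?thesis .
      qed
      note cl = CL[OF \<Psi>holo b _ \<Psi>bd]
      have KK: "K * K1\<^sup>2 \<ge> 0" using K by simp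
      define sb where "sb x = norm (of_real b * csinc (of_real (b * x)))" for x :: real
      define f where "f x = norm (F (of_real x))" for x :: real
      have Fc: "continuous_on UNIV F" by (rule holomorphic_on_imp_continuous_on[OF holo])
      have csc: "continuous_on UNIV csinc" by (rule holomorphic_on_imp_continuous_on[OF csinc_holo])
      have fc: "continuous_on UNIV f" unfolding f_def
        by (intro continuous_intros continuous_on_compose2[OF Fc]) auto
      have sbc: "continuous_on UNIV sb" unfolding sb_def
        by (intro continuous_intros continuous_on_compose2[OF csc]) auto
      have sbsq: "(sb x)\<^sup>2 = b\<^sup>2 * (norm (csinc (of_real (b * x))))\<^sup>2" for x
        using b by (simp add: sb_def norm_mult power_mult_distrib)
      have isb: "integrable lborel (\<lambda>x. (sb x)\<^sup>2)" unfolding sbsq using sinc_sq_int(1)[OF b] by simp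
      have Isb: "(\<integral>x. (sb x)\<^sup>2 \<partial>lborel) = pi * b" unfolding sbsq using sinc_sq_int(2)[OF b] b
        by (simp add: power2_eq_square)
      have ifsq: "integrable lborel (\<lambda>x. (f x)\<^sup>2)" using int by (simp add: f_def)
      have Ifsq: "(\<integral>x. (f x)\<^sup>2 \<partial>lborel) = A" by (simp add: f_def A_def)
      have amgm: "f x * sb x \<le> (t * (f x)\<^sup>2 + (sb x)\<^sup>2 / t) / 2" if t: "t > 0" for t x
      proof -
        have "0 \<le> (t * f x - sb x)\<^sup>2 / t" using t by simp
        then show ?thesis using t by (simp add: power2_eq_square field_simps)
      qed
      have ifs: "integrable lborel (\<lambda>x. f x * sb x)"
      proof (rule Bochner_Integration.integrable_bound)
        show "integrable lborel (\<lambda>x. (1 * (f x)\<^sup>2 + (sb x)\<^sup>2 / 1) / 2)"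
          using ifsq isb by simp
        show "(\<lambda>x. f x * sb x) \<in> borel_measurable lborel"
          using borel_measurable_continuous_onI[OF continuous_on_mult[OF fc sbc]] by simp
        show "AE x in lborel. norm (f x * sb x) \<le> norm ((1 * (f x)\<^sup>2 + (sb x)\<^sup>2 / 1) / 2)"
          using amgm[of 1] by (auto simp: f_def sb_def)
      qed
      have bnd: "pi * norm (F 0) \<le> (\<integral>x. f x * sb x \<partial>lborel)"
      proof -
        have "pi * norm (F 0) = norm (pi * \<Psi> 0)" by (simp add: \<Psi>_def norm_mult)
        also have "\<dots> = norm (\<integral>x. \<Psi> (of_real x) * (of_real b * csinc (of_real (b * x))) \<partial>lborel)"
          using cl(2)[OF KK] by simp
        also have "\<dots> \<le> (\<integral>x. f x * sb x \<partial>lborel)"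
        proof (rule Bochner_Integration.integral_norm_bound_integral)
          show "integrable lborel (\<lambda>x. \<Psi> (of_real x) * (of_real b * csinc (of_real (b * x))))"
            by (rule cl(1)[OF KK])
          show "integrable lborel (\<lambda>x. f x * sb x)" by (rule ifs)
          fix x
          have "(norm (csinc (of_real \<delta> * of_real x)))\<^sup>2 \<le> 1"
            using csinc_real_le[of "\<delta> * x"] by (simp add: power_le_one)
          then have "norm (\<Psi> (of_real x)) \<le> f x"
            by (simp add: \<Psi>_def f_def norm_mult norm_power mult_left_le)
          then show "norm (\<Psi> (of_real x) * (of_real b * csinc (of_real (b * x)))) \<le> f x * sb x"
            by (simp add: sb_def norm_mult mult_right_mono)
        qed
        finally show ?thesis .
      qed
      have tb: "pi * norm (F 0) \<le> (t * A + pi * b / t) / 2" if t: "t > 0" for t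
      proof -
        have "(\<integral>x. f x * sb x \<partial>lborel) \<le> (\<integral>x. (t * (f x)\<^sup>2 + (sb x)\<^sup>2 / t) / 2 \<partial>lborel)"
          by (rule integral_mono[OF ifs]) (use ifsq isb amgm[OF t] in auto)
        also have "\<dots> = (t * A + pi * b / t) / 2"
          using ifsq isb Ifsq Isb by simp
        finally show ?thesis using bnd by linarith
      qed
      define X where "X = pi * norm (F 0)"
      have X0: "X \<ge> 0" by (simp add: X_def)
      have "X\<^sup>2 \<le> pi * b * A"
      proof (cases "X = 0")
        case True then show ?thesis using Apos b by simp
      next
        case False
        then have Xp: "X > 0" using X0 by simp
        have "X \<le> ((X / A) * A + pi * b / (X / A)) / 2"
          using tb[of "X / A"] Xp Apos by (simp add: X_def)
        also have "\<dots> = (X + pi * b * A / X) / 2" using Apos Xp by (simp add: field_simps)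
        finally have "X \<le> pi * b * A / X" by simp
        then show ?thesis using Xp by (simp add: power2_eq_square pos_le_divide_eq mult.commute)
      qed
      then have "pi * (pi * (norm (F 0))\<^sup>2) \<le> pi * (b * A)"
        by (simp add: X_def power2_eq_square algebra_simps)
      then have "pi * (norm (F 0))\<^sup>2 \<le> b * A" by simp
      then show ?thesis by (simp add: b_def pos_le_divide_eq mult.commute)
    qed
    have "(norm (F 0))\<^sup>2 \<le> \<Delta> * A + e" if e: "e > 0" for e
    proof -
      define \<delta> where "\<delta> = e * pi / (2 * A)"
      have \<delta>: "\<delta> > 0" using e Apos by (simp add: \<delta>_def)
      have "(norm (F 0))\<^sup>2 \<le> A * (a + 2 * \<delta>) / pi" by (rule core[OF \<delta>])
      also have "\<dots> = \<Delta> * A + e"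
      proof -
        have d2: "2 * \<delta> * A = e * pi" using Apos by (simp add: \<delta>_def)
        have "A * (a + 2 * \<delta>) = pi * (\<Delta> * A + e)"
          unfolding a_def distrib_left using d2 by (simp add: algebra_simps)
        then show ?thesis by simp
      qed
      finally show ?thesis .
    qed
    then show ?thesis unfolding A_def[symmetric] by (rule field_le_epsilon)
  qed
qed



lemma cs_holo: "(\<lambda>z. csinc (of_real c * z)) holomorphic_on UNIV"
proof -
  have "(csinc \<circ> (\<lambda>z. of_real c * z)) holomorphic_on UNIV"
    by (rule holomorphic_on_compose) (auto intro: holomorphic_intros holomorphic_on_subset[OF csinc_holo])
  then show ?thesis by (simp add: o_def)
qed

lemma F0_props:
  fixes \<Delta> :: real
  assumes D: "\<Delta> > 0"
  defines "F0 \<equiv> (\<lambda>z. csinc (of_real (pi * \<Delta>) * z))"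
  shows "F0 \<in> PW_space (pi * \<Delta>)" "F0 0 = 1"
    "(\<integral>x. (norm (F0 (of_real x)))\<^sup>2 \<partial>lborel) = 1 / \<Delta>"
proof -
  define b where "b = pi * \<Delta>"
  have b: "b > 0" using D by (simp add: b_def)
  obtain K where K: "K > 0" "\<And>z. norm (csinc (of_real b * z)) \<le> K * exp (b * \<bar>Im z\<bar>) / (1 + norm z)"
    using csinc_scaled_bound[OF b] by blast
  have et: "exp_type_le b F0"
    unfolding exp_type_le_def
  proof (intro allI impI)
    fix e :: real assume e: "e > 0"
    have "norm (F0 z) \<le> K * exp ((b + e) * norm z)" for z
    proof -
      have "norm (F0 z) \<le> K * exp (b * \<bar>Im z\<bar>) / (1 + norm z)" using K(2)[of z] by (simp add: F0_def b_def)
      also have "\<dots> \<le> K * exp (b * \<bar>Im z\<bar>)"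
      proof -
        have "K * exp (b * \<bar>Im z\<bar>) / (1 + norm z) \<le> K * exp (b * \<bar>Im z\<bar>) / 1"
          using K(1) by (intro divide_left_mono) (auto simp: add_pos_nonneg)
        then show ?thesis by simp
      qed
      also have "\<dots> \<le> K * exp ((b + e) * norm z)"
      proof -
        have "b * \<bar>Im z\<bar> \<le> (b + e) * norm z"
          using abs_Im_le_cmod[of z] b e by (intro mult_mono) auto
        then show ?thesis using K(1) by simp
      qed
      finally show ?thesis .
    qed
    then show "\<exists>C. \<forall>z. norm (F0 z) \<le> C * exp ((b + e) * norm z)" by blast
  qed
  have int: "integrable lborel (\<lambda>x::real. (norm (F0 (of_real x)))\<^sup>2)"
    using sinc_sq_int(1)[OF b] by (simp add: F0_def b_def)
  show "F0 \<in> PW_space (pi * \<Delta>)"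
    unfolding PW_space_def using cs_holo[of b] et int by (simp add: F0_def b_def del: of_real_mult)
  show "F0 0 = 1" by (simp add: F0_def)
  show "(\<integral>x. (norm (F0 (of_real x)))\<^sup>2 \<partial>lborel) = 1 / \<Delta>"
    using sinc_sq_int(2)[OF b] D by (simp add: F0_def b_def)
qed

lemma F1_props:
  fixes \<Delta> :: real
  assumes D: "\<Delta> > 0"
  defines "F1 \<equiv> (\<lambda>z. sin (of_real (pi * \<Delta> / 2) * z) * csinc (of_real (pi * \<Delta> / 2) * z))"
  shows "F1 \<in> PW_space (pi * \<Delta>)" "F1 0 = 0" "F1 \<noteq> (\<lambda>z. 0)"
proof -
  define c where "c = pi * \<Delta> / 2"
  have c: "c > 0" using D by (simp add: c_def)
  have F1c: "F1 = (\<lambda>z. sin (of_real c * z) * csinc (of_real c * z))" by (simp add: F1_def c_def)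
  obtain K where K: "K > 0" "\<And>z. norm (csinc (of_real c * z)) \<le> K * exp (c * \<bar>Im z\<bar>) / (1 + norm z)"
    using csinc_scaled_bound[OF c] by blast
  have holo: "F1 holomorphic_on UNIV" unfolding F1c
    by (intro holomorphic_intros cs_holo)
  have et: "exp_type_le (pi * \<Delta>) F1"
    unfolding exp_type_le_def
  proof (intro allI impI)
    fix e :: real assume e: "e > 0"
    have "norm (F1 z) \<le> K * exp ((pi * \<Delta> + e) * norm z)" for z
    proof -
      have s1: "norm (sin (of_real c * z)) \<le> exp (c * norm z)"
      proof -
        have "norm (sin (of_real c * z)) \<le> exp \<bar>Im (of_real c * z)\<bar>" by (rule norm_sin_le_exp)
        also have "\<bar>Im (of_real c * z)\<bar> \<le> c * norm z"
          using c abs_Im_le_cmod[of z] by (simp add: abs_mult)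
        finally show ?thesis by simp
      qed
      have s2: "norm (csinc (of_real c * z)) \<le> K * exp (c * norm z)"
      proof -
        have "norm (csinc (of_real c * z)) \<le> K * exp (c * \<bar>Im z\<bar>) / (1 + norm z)" by (rule K(2))
        also have "\<dots> \<le> K * exp (c * \<bar>Im z\<bar>) / 1"
          using K(1) by (intro divide_left_mono) (auto simp: add_pos_nonneg)
        also have "\<dots> \<le> K * exp (c * norm z)"
          using K(1) c abs_Im_le_cmod[of z] by (simp add: mult_left_mono)
        finally show ?thesis .
      qed
      have "norm (F1 z) \<le> exp (c * norm z) * (K * exp (c * norm z))"
        unfolding F1c norm_mult by (intro mult_mono s1 s2) auto
      also have "\<dots> = K * exp ((pi * \<Delta>) * norm z)"
        by (simp add: c_def exp_add[symmetric] algebra_simps)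
      also have "\<dots> \<le> K * exp ((pi * \<Delta> + e) * norm z)"
        using K(1) e by (simp add: mult_right_mono)
      finally show ?thesis .
    qed
    then show "\<exists>C. \<forall>z. norm (F1 z) \<le> C * exp ((pi * \<Delta> + e) * norm z)" by blast
  qed
  have int: "integrable lborel (\<lambda>x::real. (norm (F1 (of_real x)))\<^sup>2)"
  proof (rule Bochner_Integration.integrable_bound)
    show "integrable lborel (\<lambda>x::real. (norm (csinc (of_real (c * x))))\<^sup>2)"
      by (rule sinc_sq_int(1)[OF c])
    have cF1: "continuous_on UNIV F1" by (rule holomorphic_on_imp_continuous_on[OF holo])
    have "continuous_on UNIV (\<lambda>x::real. F1 (of_real x))"
      by (rule continuous_on_compose2[OF cF1]) (auto intro!: continuous_intros)
    then have "continuous_on UNIV (\<lambda>x::real. (norm (F1 (of_real x)))\<^sup>2)"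
      by (intro continuous_intros)
    then show "(\<lambda>x::real. (norm (F1 (of_real x)))\<^sup>2) \<in> borel_measurable lborel"
      using borel_measurable_continuous_onI by simp
    show "AE x in lborel. norm ((norm (F1 (of_real x)))\<^sup>2) \<le> norm ((norm (csinc (of_real (c * x))))\<^sup>2)"
    proof (rule AE_I2)
      fix x :: real
      have e1: "sin (of_real c * of_real x :: complex) = of_real (sin (c * x))"
        by (simp only: of_real_mult[symmetric] sin_of_real)
      have e2: "csinc (of_real c * of_real x) = csinc (of_real (c * x))"
        by (simp only: of_real_mult)
      have "norm (F1 (of_real x)) = \<bar>sin (c * x)\<bar> * norm (csinc (of_real (c * x)))"
        unfolding F1c norm_mult e1 e2 by simp
      also have "\<dots> \<le> 1 * norm (csinc (of_real (c * x)))"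
        by (intro mult_right_mono) auto
      finally have "norm (F1 (of_real x)) \<le> norm (csinc (of_real (c * x)))" by simp
      then show "norm ((norm (F1 (of_real x)))\<^sup>2) \<le> norm ((norm (csinc (of_real (c * x))))\<^sup>2)"
        by (simp add: power_mono)
    qed
  qed
  show "F1 \<in> PW_space (pi * \<Delta>)" unfolding PW_space_def using holo et int by simp
  show "F1 0 = 0" by (simp add: F1_def)
  show "F1 \<noteq> (\<lambda>z. 0)"
  proof
    assume F0: "F1 = (\<lambda>z. 0)"
    define x0 where "x0 = pi / (2 * c)"
    have cx: "c * x0 = pi / 2" using c by (simp add: x0_def)
    have e1: "sin (of_real c * of_real x0 :: complex) = of_real (sin (c * x0))"
      by (simp only: of_real_mult[symmetric] sin_of_real)
    have e2: "csinc (of_real c * of_real x0) = of_real (sin (c * x0) / (c * x0))"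
      using csinc_of_real[of "c * x0"] cx by (simp only: of_real_mult[symmetric]) simp
    have "F1 (of_real x0) = of_real (sin (c * x0) * (sin (c * x0) / (c * x0)))"
      unfolding F1c e1 e2 by simp
    also have "\<dots> = of_real (2 / pi)" unfolding cx by simp
    finally have "F1 (of_real x0) \<noteq> 0" by simp
    then show False using F0 by simp
  qed
qed

theorem theorem15:
  fixes \<Delta> :: real
  assumes "\<Delta> > 0"
  shows "(INF F\<in>PW_space (pi * \<Delta>) - {\<lambda>z. 0}. L2_norm_WO F / L2_norm_R F) = 1
       \<and> (SUP F\<in>PW_space (pi * \<Delta>) - {\<lambda>z. 0}. L2_norm_WO F / L2_norm_R F) = sqrt (1 + \<Delta> / 2)"
proof -
  have D: "\<Delta> > 0" by fact
  define P where "P = PW_space (pi * \<Delta>) - {\<lambda>z. 0}"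
  define r where "r F = L2_norm_WO F / L2_norm_R F" for F
  define I where "I F = (\<integral>x. (norm (F (of_real x)))\<^sup>2 \<partial>lborel)" for F :: "complex \<Rightarrow> complex"
  have Ipos: "I F > 0" if "F \<in> P" for F
  proof -
    have PW: "F \<in> PW_space (pi * \<Delta>)" and nz: "F \<noteq> (\<lambda>z. 0)" using that by (auto simp: P_def)
    have holo: "F holomorphic_on UNIV"
      and int: "integrable lborel (\<lambda>x::real. (norm (F (of_real x)))\<^sup>2)"
      using PW by (auto simp: PW_space_def)
    have "I F \<ge> 0" unfolding I_def by (rule Bochner_Integration.integral_nonneg) simp
    moreover have "I F \<noteq> 0"
    proof
      assume "I F = 0"
      then have "(\<integral>x. (norm (F (of_real x)))\<^sup>2 \<partial>lborel) = 0" by (simp only: I_def)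
      then have "F w = 0" for w by (rule PW_zero[OF holo int])
      then show False using nz by auto
    qed
    ultimately show ?thesis by simp
  qed
  have rF: "r F = sqrt (I F + 1/2 * (norm (F 0))\<^sup>2) / sqrt (I F)" for F
    by (simp add: r_def L2_norm_WO_def L2_norm_R_def I_def)
  have low: "1 \<le> r F" if F: "F \<in> P" for F
  proof -
    have "sqrt (I F) \<le> sqrt (I F + 1/2 * (norm (F 0))\<^sup>2)" by simp
    moreover have "sqrt (I F) > 0" using Ipos[OF F] by simp
    ultimately show ?thesis unfolding rF by (simp add: le_divide_eq_1_pos)
  qed
  have up: "r F \<le> sqrt (1 + \<Delta> / 2)" if F: "F \<in> P" for F
  proof -
    have PW: "F \<in> PW_space (pi * \<Delta>)" using F by (simp add: P_def)
    have "(norm (F 0))\<^sup>2 \<le> \<Delta> * I F" using main_ineq[OF PW D] by (simp add: I_def)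
    then have "I F + 1/2 * (norm (F 0))\<^sup>2 \<le> (1 + \<Delta> / 2) * I F" by (simp add: algebra_simps)
    then have "sqrt (I F + 1/2 * (norm (F 0))\<^sup>2) \<le> sqrt (1 + \<Delta> / 2) * sqrt (I F)"
      by (simp add: real_sqrt_mult[symmetric])
    moreover have "sqrt (I F) > 0" using Ipos[OF F] by simp
    ultimately show ?thesis unfolding rF by (simp add: pos_divide_le_eq)
  qed
  define F1 where "F1 = (\<lambda>z. sin (of_real (pi * \<Delta> / 2) * z) * csinc (of_real (pi * \<Delta> / 2) * z))"
  have F1: "F1 \<in> P" "r F1 = 1"
  proof -
    show F1P: "F1 \<in> P" using F1_props[OF D] by (simp add: P_def F1_def)
    have "F1 0 = 0" using F1_props(2)[OF D] by (simp add: F1_def)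
    then show "r F1 = 1" unfolding rF using Ipos[OF F1P] by simp
  qed
  define F0 where "F0 = (\<lambda>z. csinc (of_real (pi * \<Delta>) * z))"
  have F0: "F0 \<in> P" "r F0 = sqrt (1 + \<Delta> / 2)"
  proof -
    have PW: "F0 \<in> PW_space (pi * \<Delta>)" and v: "F0 0 = 1" and i: "I F0 = 1 / \<Delta>"
      using F0_props[OF D] by (simp_all add: F0_def I_def)
    show "F0 \<in> P" using PW v by (auto simp: P_def)
    have "r F0 = sqrt (1 / \<Delta> + 1/2) / sqrt (1 / \<Delta>)" unfolding rF i v by simp
    also have "\<dots> = sqrt ((1 / \<Delta> + 1/2) / (1 / \<Delta>))" by (rule real_sqrt_divide[symmetric])
    also have "(1 / \<Delta> + 1/2) / (1 / \<Delta>) = 1 + \<Delta> / 2" using D by (simp add: field_simps)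
    finally show "r F0 = sqrt (1 + \<Delta> / 2)" .
  qed
  have "(INF F\<in>P. r F) = 1"
  proof (rule cInf_eq_minimum)
    show "1 \<in> r ` P" using image_eqI[of 1 r F1 P] F1 by simp
  qed (use low in auto)
  moreover have "(SUP F\<in>P. r F) = sqrt (1 + \<Delta> / 2)"
  proof (rule cSup_eq_maximum)
    show "sqrt (1 + \<Delta> / 2) \<in> r ` P" using image_eqI[of "sqrt (1 + \<Delta> / 2)" r F0 P] F0 by simp
  qed (use up in auto)
  ultimately show ?thesis by (simp add: P_def r_def)
qed

end
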